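(* Let $A=\mathbb C\langle u^{\pm1},v^{\pm1}\rangle$ and let $\{\cdot,\cdot\}_K:A\times A\to A$ be the bracket $\{a,b\}_K=\mu(\llbracket a\otimes b\rrbracket_K)$ described in the context. Then: (1) $\{\cdot,\cdot\}_K$ is bilinear, hence extends to a linear map $A\otimes A\to A$; (2a) for all $a,b,c\in A$: $\{a,bc\}_K=\{a,b\}_K\,c+b\,\{a,c\}_K$; (2b) for all $a,b,c\in A$: $\{ab,c\}_K=\{ba,c\}_K$; (3) for all $a,b\in A$: $\{a,b\}_K\equiv-\{b,a\}_K \bmod [A,A]$; (4) for all $H_1,H_2,x\in A$: $\{H_1,\{H_2,x\}_K\}_K-\{H_2,\{H_1,x\}_K\}_K=\{\{H_1,H_2\}_K,x\}_K$.
   Context: $A=\mathbb C\langle u^{\pm1},v^{\pm1}\rangle$ is the group algebra over $\mathbb C$ of the free group on two generators $u,v$. $[A,A]$ denotes the linear span of all $ab-ba$, $a,b\in A$. $\mu:A\otimes A\to A$ is multiplication, $\mu(a\otimes b)=ab$. $A\otimes A$ is an algebra with componentwise multiplication $(x\otimes y)(x'\otimes y')=xx'\otimes yy'$. The double bracket $\llbracket\cdot\rrbracket_K:A\otimes A\to A\otimes A$ is the linear map determined by the values on generators $\llbracket u\otimes v\rrbracket_K=-vu\otimes1$, $\llbracket v\otimes u\rrbracket_K=uv\otimes 1$, $\llbracket u\otimes u\rrbracket_K=\llbracket v\otimes v\rrbracket_K=0$, together with the Leibniz rules $\llbracket a\otimes bc\rrbracket_K=\llbracket a\otimes b\rrbracket_K(1\otimes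 c)+(b\otimes1)\llbracket a\otimes c\rrbracket_K$ and $\llbracket ab\otimes c\rrbracket_K=\llbracket a\otimes c\rrbracket_K(b\otimes1)+(1\otimes a)\llbracket b\otimes c\rrbracket_K$. Consequently on inverses: $\llbracket u^{-1}\otimes v^{-1}\rrbracket_K=-1\otimes u^{-1}v^{-1}$, $\llbracket v^{-1}\otimes u^{-1}\rrbracket_K=1\otimes v^{-1}u^{-1}$, $\llbracket u^{-1}\otimes v\rrbracket_K=v\otimes u^{-1}$, $\llbracket v\otimes u^{-1}\rrbracket_K=-v\otimes u^{-1}$, $\llbracket u\otimes v^{-1}\rrbracket_K=u\otimes v^{-1}$, $\llbracket v^{-1}\otimes u\rrbracket_K=-u\otimes v^{-1}$, and brackets of a letter with itself or its inverse vanish. Explicitly, for monomials $a=a_1\cdots a_k$, $b=b_1\cdots b_m$ with letters in $\{u^{\pm1},v^{\pm1}\}$, writing $\llbracket a_i\otimes b_j\rrbracket_K=x_{ij}\otimes y_{ij}$, one has $\llbracket a\otimes b\rrbracket_K=\sum_{i,j}(b_1\cdots b_{j-1}x_{ij}a_{i+1}\cdots a_k)\otimes(a_1\cdots a_{i-1}y_{ij}b_{j+1}\cdots b_m)$, extended bilinearly. The bracket is $\{a,b\}_K=\mu(\llbracket a\otimes b\rrbracket_K)$. *)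

theory Defs
  imports Complex_Main "HOL-Library.Poly_Mapping"
begin

text \<open>A letter is L g e: g = False means generator u, g = True means v;
  e = True means the inverse. So u = L False False, u^-1 = L False True,
  v = L True False, v^-1 = L True True.\<close>

datatype letter = L bool bool

fun inv_l :: "letter \<Rightarrow> letter" where
  "inv_l (L g e) = L g (\<not> e)"

fun reduced :: "letter list \<Rightarrow> bool" where
  "reduced [] = True"
| "reduced [x] = True"
| "reduced (x # y # ys) = (y \<noteq> inv_l x \<and> reduced (y # ys))"

fun cr :: "letter \<Rightarrow> letter list \<Rightarrow> letter list" where
  "cr x [] = [x]"
| "cr x (y # ys) = (if y = inv_l x then ys else x # y # ys)"

lemma inv_l_neq[simp]: "inv_l x \<noteq> x" "x \<noteq> inv_l x"
  by (cases x, auto)+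

lemma inv_l_inv_l[simp]: "inv_l (inv_l x) = x"
  by (cases x) auto

lemma reduced_tl: "reduced (y # ys) \<Longrightarrow> reduced ys"
  by (cases ys) auto

lemma reduced_cr: "reduced w \<Longrightarrow> reduced (cr x w)"
  by (cases w) (auto dest: reduced_tl)

lemma reduced_foldr_cr: "reduced w \<Longrightarrow> reduced (foldr cr a w)"
  by (induction a) (auto intro: reduced_cr)

lemma cr_cancel: "reduced w \<Longrightarrow> cr x (cr (inv_l x) w) = w"
proof (cases w)
  case (Cons y ys)
  assume r: "reduced w"
  show ?thesis
  proof (cases "y = x")
    case True
    then show ?thesis using Cons r by (cases ys) auto
  next
    case False
    then show ?thesis using Cons r by (cases ys) auto
  qed
qed simp

lemma foldr_cr_cr:
  assumes "reduced r" "reduced c"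
  shows "foldr cr (cr x r) c = cr x (foldr cr r c)"
proof (cases r)
  case Nil then show ?thesis by simp
next
  case (Cons y r')
  show ?thesis
  proof (cases "y = inv_l x")
    case True
    have "reduced (foldr cr r' c)" using assms(2) by (rule reduced_foldr_cr)
    then show ?thesis using Cons True cr_cancel[of "foldr cr r' c" x] by simp
  next
    case False then show ?thesis using Cons by simp
  qed
qed

lemma foldr_cr_assoc:
  assumes "reduced b" "reduced c"
  shows "foldr cr (foldr cr a b) c = foldr cr a (foldr cr b c)"
  using assms
proof (induction a)
  case (Cons x a)
  have "reduced (foldr cr a b)" using Cons.prems(1) by (rule reduced_foldr_cr)
  then show ?case using Cons foldr_cr_cr[of "foldr cr a b" c x] by simp
qed simp

lemma foldr_cr_Nil: "reduced w \<Longrightarrow> foldr cr w [] = w"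
proof (induction w)
  case (Cons x w)
  have r: "reduced w" using Cons.prems by (rule reduced_tl)
  then show ?case using Cons by (cases w) auto
qed simp

typedef fg = "{w. reduced w}" morphisms word Abs_fg
  by (rule exI[of _ "[]"]) simp

text \<open>The (non-commutative) group law of the free group is written additively,
  so that the group algebra is the convolution ring of finitely supported functions fg to complex.\<close>
instantiation fg :: monoid_add
begin
definition zero_fg :: fg where "zero_fg = Abs_fg []"
definition plus_fg :: "fg \<Rightarrow> fg \<Rightarrow> fg" where
  "plus_fg a b = Abs_fg (foldr cr (word a) (word b))"
instance
proof
  fix a b c :: fg
  have ra: "reduced (word a)" "reduced (word b)" "reduced (word c)"
    using word by auto
  show "a + b + c = a + (b + c)"
    unfolding plus_fg_def
    using ra by (simp add: Abs_fg_inverse reduced_foldr_cr foldr_cr_assoc)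
  show "0 + a = a" unfolding plus_fg_def zero_fg_def
    by (simp add: Abs_fg_inverse word_inverse)
  show "a + 0 = a" unfolding plus_fg_def zero_fg_def
    using ra by (simp add: Abs_fg_inverse word_inverse foldr_cr_Nil)
qed
end

type_synonym A = "fg \<Rightarrow>\<^sub>0 complex"
type_synonym AA = "(fg \<times> fg) \<Rightarrow>\<^sub>0 complex"   \<comment> \<open>A \<otimes> A, basis g \<otimes> h\<close>

definition cs :: "complex \<Rightarrow> ('k \<Rightarrow>\<^sub>0 complex) \<Rightarrow> ('k \<Rightarrow>\<^sub>0 complex)" where
  "cs c p = Poly_Mapping.map (\<lambda>z. c * z) p"

definition tens :: "A \<Rightarrow> A \<Rightarrow> AA" where
  "tens p q = (\<Sum>g\<in>Poly_Mapping.keys p. \<Sum>h\<in>Poly_Mapping.keys q.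
       Poly_Mapping.single (g, h) (Poly_Mapping.lookup p g * Poly_Mapping.lookup q h))"

definition mu :: "AA \<Rightarrow> A" where
  "mu t = (\<Sum>gh\<in>Poly_Mapping.keys t. Poly_Mapping.single (fst gh + snd gh) (Poly_Mapping.lookup t gh))"

definition gen_el :: "letter \<Rightarrow> A" where
  "gen_el x = Poly_Mapping.single (Abs_fg [x]) 1"

definition mono :: "letter list \<Rightarrow> A" where
  "mono w = prod_list (map gen_el w)"

text \<open>Values of the double bracket on pairs of letters: Some (c, x, y) means
  c \<cdot> x \<otimes> y (x, y words), None means 0.\<close>
fun lbr :: "letter \<Rightarrow> letter \<Rightarrow> (complex \<times> letter list \<times> letter list) option" where
  "lbr (L False False) (L True False) = Some (-1, [L True False, L False False], [])"
| "lbr (L True False) (L False False) = Some (1, [L False False, L True False], [])"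
| "lbr (L False True) (L True True) = Some (-1, [], [L False True, L True True])"
| "lbr (L True True) (L False True) = Some (1, [], [L True True, L False True])"
| "lbr (L False True) (L True False) = Some (1, [L True False], [L False True])"
| "lbr (L True False) (L False True) = Some (-1, [L True False], [L False True])"
| "lbr (L False False) (L True True) = Some (1, [L False False], [L True True])"
| "lbr (L True True) (L False False) = Some (-1, [L False False], [L True True])"
| "lbr _ _ = None"

definition dbr_word :: "letter list \<Rightarrow> letter list \<Rightarrow> AA" where
  "dbr_word a b = (\<Sum>i<length a. \<Sum>j<length b.
     (case lbr (a ! i) (b ! j) of
        None \<Rightarrow> 0
      | Some (c, x, y) \<Rightarrow>
          cs c (tens (mono (take j b) * mono x * mono (drop (Suc i) a))
                     (mono (take i a) * mono y * mono (drop (Suc j) b)))))"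

text \<open>bilinear extension to A \<otimes> A (monomials of A are the group elements g,
  written as reduced words word g)\<close>
definition dbrK :: "A \<Rightarrow> A \<Rightarrow> AA" where
  "dbrK a b = (\<Sum>g\<in>Poly_Mapping.keys a. \<Sum>h\<in>Poly_Mapping.keys b.
      cs (Poly_Mapping.lookup a g * Poly_Mapping.lookup b h) (dbr_word (word g) (word h)))"

definition brK :: "A \<Rightarrow> A \<Rightarrow> A" where
  "brK a b = mu (dbrK a b)"

definition commA :: "A set" where
  "commA = module.span cs {x * y - y * x | x y. True}"

end

theory Submission
  imports Defs
begin


lemma lookup_cs: "Poly_Mapping.lookup (cs c p) k = c * Poly_Mapping.lookup p k"
  unfolding cs_def by (simp add: Poly_Mapping.map.rep_eq when_def)

lemma keys_cs: "Poly_Mapping.keys (cs c p) \<subseteq> Poly_Mapping.keys p"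
  by (auto simp: in_keys_iff lookup_cs)

lemma cs_eq: "cs c (p::A) = Poly_Mapping.single 0 c * p"
proof -
  have "(\<lambda>z. c * z) = (*) c" by (rule ext) simp
  then show ?thesis unfolding cs_def by (simp add: mult_map_scale_conv_mult)
qed

lemma cs_0[simp]: "cs 0 p = 0" by (rule poly_mapping_eqI) (simp add: lookup_cs)
lemma cs_1[simp]: "cs 1 p = p" by (rule poly_mapping_eqI) (simp add: lookup_cs)
lemma cs_zero[simp]: "cs c 0 = 0" by (rule poly_mapping_eqI) (simp add: lookup_cs)
lemma cs_add: "cs c (p + q) = cs c p + cs c q"
  by (rule poly_mapping_eqI) (simp add: lookup_cs lookup_add algebra_simps)
lemma cs_add2: "cs (c + d) p = cs c p + cs d p"
  by (rule poly_mapping_eqI) (simp add: lookup_cs lookup_add algebra_simps)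
lemma cs_cs: "cs c (cs d p) = cs (c * d) p"
  by (rule poly_mapping_eqI) (simp add: lookup_cs)
lemma cs_minus: "cs c (- p) = - cs c p"
  by (rule poly_mapping_eqI) (simp add: lookup_cs)
lemma cs_diff: "cs c (p - q) = cs c p - cs c q"
  by (rule poly_mapping_eqI) (simp add: lookup_cs lookup_minus algebra_simps)
lemma cs_neg1: "cs (-1) p = - p"
  by (rule poly_mapping_eqI) (simp add: lookup_cs)
lemma cs_sum: "cs c (sum f S) = sum (\<lambda>x. cs c (f x)) S"
  by (induction S rule: infinite_finite_induct) (auto simp: cs_add)

lemma update_eq_add:
  assumes "a \<notin> Poly_Mapping.keys f"
  shows "Poly_Mapping.update a b f = f + Poly_Mapping.single a b"
  using assms by (intro poly_mapping_eqI) (auto simp: lookup_update lookup_add lookup_single in_keys_iff when_def)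

lemma pm_induct [case_names zero add]:
  assumes "P 0" "\<And>f a b. P f \<Longrightarrow> P (f + Poly_Mapping.single a b)"
  shows "P x"
proof (induction x rule: update_induct)
  case const then show ?case using assms(1) .
next
  case (update f a b) then show ?case using assms(2) update_eq_add by metis
qed

lemma sc_comm: "Poly_Mapping.single 0 c * (p::A) = p * Poly_Mapping.single 0 c"
proof (induction p rule: pm_induct)
  case zero then show ?case by simp
next
  case (add f a b)
  then show ?case by (simp add: distrib_left distrib_right mult_single mult.commute)
qed

lemma cs_mult_left: "cs c (p::A) * q = cs c (p * q)"
  by (simp add: cs_eq mult.assoc)
lemma cs_mult_right: "(p::A) * cs c q = cs c (p * q)"
  by (simp add: cs_eq mult.assoc[symmetric] sc_comm) (simp add: mult.assoc sc_comm)

lemma word_single: "word (Abs_fg [x]) = [x]"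
  by (simp add: Abs_fg_inverse)

lemma reduced_word: "reduced (word g)" using word by auto

definition red :: "letter list \<Rightarrow> letter list" where "red w = foldr cr w []"

lemma reduced_red: "reduced (red w)"
  unfolding red_def by (rule reduced_foldr_cr) simp

lemma red_Cons: "red (x # w) = cr x (red w)" by (simp add: red_def)
lemma red_Nil[simp]: "red [] = []" by (simp add: red_def)

lemma plus_fg_single: "reduced r \<Longrightarrow> Abs_fg [x] + Abs_fg r = Abs_fg (cr x r)"
  by (simp add: plus_fg_def word_single Abs_fg_inverse)

lemma mono_Nil[simp]: "mono [] = 1" by (simp add: mono_def)
lemma mono_Cons: "mono (x # w) = gen_el x * mono w" by (simp add: mono_def)
lemma mono_append: "mono (a @ b) = mono a * mono b" by (simp add: mono_def)
lemma mono_single[simp]: "mono [x] = gen_el x" by (simp add: mono_def)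
lemma mono_snoc: "mono (w @ [x]) = mono w * gen_el x" by (simp add: mono_append)

lemma mono_red: "mono w = Poly_Mapping.single (Abs_fg (red w)) 1"
proof (induction w)
  case Nil then show ?case by (simp add: zero_fg_def[symmetric])
next
  case (Cons x w)
  have "mono (x # w) = Poly_Mapping.single (Abs_fg [x] + Abs_fg (red w)) 1"
    by (simp add: mono_Cons Cons gen_el_def mult_single)
  also have "\<dots> = Poly_Mapping.single (Abs_fg (red (x # w))) 1"
    by (simp add: plus_fg_single reduced_red red_Cons)
  finally show ?case .
qed

lemma red_reduced: "reduced w \<Longrightarrow> red w = w"
  by (simp add: red_def foldr_cr_Nil)

lemma mono_word: "mono (word g) = Poly_Mapping.single g 1"
  by (simp add: mono_red red_reduced reduced_word word_inverse)

lemma mono_eq_red: "mono (red w) = mono w"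
  by (simp add: mono_red red_reduced reduced_red)

lemma word_Abs_red: "word (Abs_fg (red w)) = red w"
  by (simp add: Abs_fg_inverse reduced_red)

lemma gen_inv: "gen_el x * gen_el (inv_l x) = 1"
proof -
  have "gen_el x * gen_el (inv_l x) = mono [x, inv_l x]" by (simp add: mono_def)
  also have "\<dots> = 1" by (simp add: mono_red red_def zero_fg_def[symmetric])
  finally show ?thesis .
qed

lemma gen_inv2: "gen_el (inv_l x) * gen_el x = 1"
  using gen_inv[of "inv_l x"] by simp

lemma gen_inv_assoc: "gen_el x * (gen_el (inv_l x) * y) = y"
  by (simp add: mult.assoc[symmetric] gen_inv)
lemma gen_inv2_assoc: "gen_el (inv_l x) * (gen_el x * y) = y"
  by (simp add: mult.assoc[symmetric] gen_inv2)

definition lin :: "(fg \<Rightarrow> A) \<Rightarrow> A \<Rightarrow> A" where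
  "lin F a = (\<Sum>g\<in>Poly_Mapping.keys a. cs (Poly_Mapping.lookup a g) (F g))"

lemma lin_superset:
  assumes "finite S" "Poly_Mapping.keys a \<subseteq> S"
  shows "lin F a = (\<Sum>g\<in>S. cs (Poly_Mapping.lookup a g) (F g))"
  unfolding lin_def
  by (rule sum.mono_neutral_left) (use assms in \<open>auto simp: in_keys_iff\<close>)

lemma lin_add: "lin F (a + b) = lin F a + lin F b"
proof -
  let ?S = "Poly_Mapping.keys a \<union> Poly_Mapping.keys b"
  have "lin F (a + b) = (\<Sum>g\<in>?S. cs (Poly_Mapping.lookup (a+b) g) (F g))"
    by (rule lin_superset) (auto simp: keys_add)
  also have "\<dots> = (\<Sum>g\<in>?S. cs (Poly_Mapping.lookup a g) (F g)) + (\<Sum>g\<in>?S. cs (Poly_Mapping.lookup b g) (F g))"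
    by (simp add: lookup_add cs_add2 sum.distrib)
  also have "\<dots> = lin F a + lin F b"
    by (subst (1 2) lin_superset[of ?S]) (auto)
  finally show ?thesis .
qed

lemma lin_zero[simp]: "lin F 0 = 0" by (simp add: lin_def)

lemma lin_cs: "lin F (cs c a) = cs c (lin F a)"
proof -
  have "lin F (cs c a) = (\<Sum>g\<in>Poly_Mapping.keys a. cs (Poly_Mapping.lookup (cs c a) g) (F g))"
    by (rule lin_superset) (auto simp: keys_cs)
  also have "\<dots> = cs c (lin F a)"
    by (simp add: lin_def lookup_cs cs_cs cs_sum)
  finally show ?thesis .
qed

lemma lin_single: "lin F (Poly_Mapping.single g c) = cs c (F g)"
proof -
  have "lin F (Poly_Mapping.single g c) = (\<Sum>h\<in>{g}. cs (Poly_Mapping.lookup (Poly_Mapping.single g c) h) (F h))"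
    by (rule lin_superset) auto
  then show ?thesis by simp
qed

lemma lin_mono: "lin F (mono w) = F (Abs_fg (red w))"
  by (simp add: mono_red lin_single)

lemma single_cs: "Poly_Mapping.single g c = cs c (mono (word g))"
  by (simp add: mono_word cs_eq mult_single)

lemma A_induct [case_names zero add]:
  assumes "P 0" "\<And>f c w. P f \<Longrightarrow> P (f + cs c (mono w))"
  shows "P x"
  by (induction x rule: pm_induct) (use assms in \<open>auto simp: single_cs\<close>)




lemma pm_expand: "(p :: 'k \<Rightarrow>\<^sub>0 complex) = (\<Sum>g\<in>Poly_Mapping.keys p. Poly_Mapping.single g (Poly_Mapping.lookup p g))"
  by (rule poly_mapping_eqI) (simp add: lookup_sum lookup_single when_def in_keys_iff)

lemma mu_superset:
  assumes "finite S" "Poly_Mapping.keys t \<subseteq> S"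
  shows "mu t = (\<Sum>gh\<in>S. Poly_Mapping.single (fst gh + snd gh) (Poly_Mapping.lookup t gh))"
  unfolding mu_def by (rule sum.mono_neutral_left) (use assms in \<open>auto simp: in_keys_iff\<close>)

lemma mu_add: "mu (s + t) = mu s + mu t"
proof -
  let ?S = "Poly_Mapping.keys s \<union> Poly_Mapping.keys t"
  have "mu (s + t) = (\<Sum>gh\<in>?S. Poly_Mapping.single (fst gh + snd gh) (Poly_Mapping.lookup (s+t) gh))"
    by (rule mu_superset) (auto simp: keys_add)
  also have "\<dots> = (\<Sum>gh\<in>?S. Poly_Mapping.single (fst gh + snd gh) (Poly_Mapping.lookup s gh))
     + (\<Sum>gh\<in>?S. Poly_Mapping.single (fst gh + snd gh) (Poly_Mapping.lookup t gh))"
    by (simp add: lookup_add single_add sum.distrib)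
  also have "\<dots> = mu s + mu t" by (subst (1 2) mu_superset[of ?S]) auto
  finally show ?thesis .
qed

lemma mu_zero[simp]: "mu 0 = 0" by (simp add: mu_def)

lemma mu_sum: "mu (sum f S) = (\<Sum>x\<in>S. mu (f x))"
  by (induction S rule: infinite_finite_induct) (auto simp: mu_add)

lemma mu_single: "mu (Poly_Mapping.single (g, h) c) = Poly_Mapping.single (g + h) c"
proof -
  have "mu (Poly_Mapping.single (g, h) c) = (\<Sum>gh\<in>{(g,h)}. Poly_Mapping.single (fst gh + snd gh) (Poly_Mapping.lookup (Poly_Mapping.single (g, h) c) gh))"
    by (rule mu_superset) auto
  then show ?thesis by simp
qed

lemma mu_cs: "mu (cs c t) = cs c (mu t)"
proof -
  have "mu (cs c t) = (\<Sum>gh\<in>Poly_Mapping.keys t. Poly_Mapping.single (fst gh + snd gh) (Poly_Mapping.lookup (cs c t) gh))"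
    by (rule mu_superset) (auto simp: keys_cs)
  also have "\<dots> = cs c (mu t)"
    by (simp add: mu_def cs_sum lookup_cs cs_eq mult_single sum_distrib_left)
  finally show ?thesis .
qed

lemma mu_tens: "mu (tens p q) = p * q"
proof -
  have "mu (tens p q) = (\<Sum>g\<in>Poly_Mapping.keys p. \<Sum>h\<in>Poly_Mapping.keys q.
      Poly_Mapping.single g (Poly_Mapping.lookup p g) * Poly_Mapping.single h (Poly_Mapping.lookup q h))"
    by (simp add: tens_def mu_sum mu_single mult_single)
  also have "\<dots> = (\<Sum>g\<in>Poly_Mapping.keys p. Poly_Mapping.single g (Poly_Mapping.lookup p g)) *
                  (\<Sum>h\<in>Poly_Mapping.keys q. Poly_Mapping.single h (Poly_Mapping.lookup q h))"
    by (simp add: sum_distrib_left sum_distrib_right) (rule sum.swap)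
  also have "\<dots> = p * q" by (simp flip: pm_expand)
  finally show ?thesis .
qed

definition kl :: "letter \<Rightarrow> letter \<Rightarrow> A \<Rightarrow> A" where
  "kl x y z = (case lbr x y of None \<Rightarrow> 0 | Some (c, X, Y) \<Rightarrow> cs c (mono X * z * mono Y))"

definition Kw :: "letter list \<Rightarrow> letter list \<Rightarrow> A \<Rightarrow> A" where
  "Kw a b m = (\<Sum>i<length a. \<Sum>j<length b.
      mono (take j b) * kl (a ! i) (b ! j) (mono (drop (Suc i) a) * m * mono (take i a)) * mono (drop (Suc j) b))"

definition Bw :: "letter list \<Rightarrow> letter list \<Rightarrow> A" where
  "Bw a b = Kw a b 1"

lemma mu_dbr_word: "mu (dbr_word a b) = Bw a b"
  unfolding dbr_word_def Bw_def Kw_def mu_sum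
proof (intro sum.cong refl)
  fix i j
  show "mu (case lbr (a ! i) (b ! j) of None \<Rightarrow> 0
          | Some (c, x, y) \<Rightarrow> cs c (tens (mono (take j b) * mono x * mono (drop (Suc i) a))
                 (mono (take i a) * mono y * mono (drop (Suc j) b)))) =
        mono (take j b) * kl (a ! i) (b ! j) (mono (drop (Suc i) a) * 1 * mono (take i a)) * mono (drop (Suc j) b)"
    by (auto simp: kl_def mu_cs mu_tens cs_mult_left cs_mult_right mult.assoc split: option.split)
qed

lemma brK_lin: "brK a b = lin (\<lambda>g. lin (\<lambda>h. Bw (word g) (word h)) b) a"
  unfolding brK_def dbrK_def lin_def mu_sum mu_cs mu_dbr_word
  by (simp add: cs_sum cs_cs)

lemma brK_add1: "brK (a + a') b = brK a b + brK a' b"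
  by (simp add: brK_lin lin_add)
lemma lin_fun_add: "lin (\<lambda>g. F g + G g) a = lin F a + lin G a"
  by (simp add: lin_def cs_add sum.distrib)
lemma lin_fun_cs: "lin (\<lambda>g. cs c (F g)) a = cs c (lin F a)"
  by (simp add: lin_def cs_sum cs_cs mult.commute)
lemma lin_fun_zero[simp]: "lin (\<lambda>g. 0) a = 0"
  by (simp add: lin_def)

lemma brK_add2: "brK a (b + b') = brK a b + brK a b'"
  by (simp add: brK_lin lin_add lin_fun_add)
lemma brK_cs1: "brK (cs c a) b = cs c (brK a b)"
  by (simp add: brK_lin lin_cs)
lemma brK_cs2: "brK a (cs c b) = cs c (brK a b)"
  by (simp add: brK_lin lin_cs lin_fun_cs)

lemma brK_zero1[simp]: "brK 0 b = 0" by (simp add: brK_lin)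
lemma brK_zero2[simp]: "brK a 0 = 0" by (simp add: brK_lin lin_def)

lemma brK_mono: "brK (mono a) (mono b) = Bw (red a) (red b)"
  by (simp add: brK_lin lin_mono word_Abs_red)




definition DerW :: "(letter \<Rightarrow> A) \<Rightarrow> letter list \<Rightarrow> A" where
  "DerW \<delta> w = (\<Sum>k<length w. mono (take k w) * \<delta> (w ! k) * mono (drop (Suc k) w))"

lemma DerW_Nil[simp]: "DerW \<delta> [] = 0" by (simp add: DerW_def)

lemma DerW_Cons: "DerW \<delta> (x # w) = \<delta> x * mono w + gen_el x * DerW \<delta> w"
  unfolding DerW_def
  by (simp add: sum.lessThan_Suc_shift mono_Cons sum_distrib_left mult.assoc del: sum.lessThan_Suc)

lemma DerW_append: "DerW \<delta> (a @ b) = DerW \<delta> a * mono b + mono a * DerW \<delta> b"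
  by (induction a) (simp_all add: DerW_Cons mono_Cons mono_append algebra_simps)

lemma DerW_single[simp]: "DerW \<delta> [x] = \<delta> x"
  by (simp add: DerW_Cons)

lemma DerW_add: "DerW (\<lambda>y. \<delta>1 y + \<delta>2 y) w = DerW \<delta>1 w + DerW \<delta>2 w"
  by (simp add: DerW_def algebra_simps sum.distrib)

lemma DerW_minus: "DerW (\<lambda>y. - \<delta> y) w = - DerW \<delta> w"
  by (simp add: DerW_def sum_negf)

lemma DerW_diff: "DerW (\<lambda>y. \<delta>1 y - \<delta>2 y) w = DerW \<delta>1 w - DerW \<delta>2 w"
  by (simp add: DerW_def algebra_simps sum_subtractf)

lemma DerW_zero: "DerW (\<lambda>y. 0) w = 0"
  by (simp add: DerW_def)

lemma DerW_cong: "(\<And>y. \<delta>1 y = \<delta>2 y) \<Longrightarrow> DerW \<delta>1 w = DerW \<delta>2 w"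
  by (simp add: DerW_def)

lemma DerW_cr: "DerW \<delta> (cr x r) = (if r \<noteq> [] \<and> hd r = inv_l x then DerW \<delta> (x # r) - (\<delta> x * gen_el (inv_l x) + gen_el x * \<delta> (inv_l x)) * mono (tl r) else DerW \<delta> (x # r))"
proof (cases r)
  case (Cons y r')
  show ?thesis
  proof (cases "y = inv_l x")
    case True
    then show ?thesis using Cons
      by (simp add: DerW_Cons mono_Cons algebra_simps gen_inv_assoc)
  qed (use Cons in auto)
qed simp

lemma DerW_red:
  assumes "\<And>x. \<delta> x * gen_el (inv_l x) + gen_el x * \<delta> (inv_l x) = 0"
  shows "DerW \<delta> (red w) = DerW \<delta> w"
proof (induction w)
  case (Cons x w)
  have "DerW \<delta> (red (x # w)) = DerW \<delta> (x # red w)"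
    by (simp add: red_Cons DerW_cr assms)
  also have "\<dots> = DerW \<delta> (x # w)"
    by (simp add: DerW_Cons Cons mono_eq_red)
  finally show ?case .
qed simp

definition DerI :: "(letter \<Rightarrow> A \<Rightarrow> A) \<Rightarrow> letter list \<Rightarrow> A \<Rightarrow> A" where
  "DerI \<delta> w m = (\<Sum>k<length w. \<delta> (w ! k) (mono (drop (Suc k) w) * m * mono (take k w)))"

lemma DerI_Nil[simp]: "DerI \<delta> [] m = 0" by (simp add: DerI_def)

lemma DerI_Cons: "DerI \<delta> (x # w) m = \<delta> x (mono w * m) + DerI \<delta> w (m * gen_el x)"
  unfolding DerI_def
  by (simp add: sum.lessThan_Suc_shift mono_Cons mult.assoc del: sum.lessThan_Suc)

lemma DerI_append: "DerI \<delta> (a @ b) m = DerI \<delta> a (mono b * m) + DerI \<delta> b (m * mono a)"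
  by (induction a arbitrary: m) (simp_all add: DerI_Cons mono_Cons mono_append algebra_simps)

lemma DerI_single[simp]: "DerI \<delta> [x] m = \<delta> x m"
  by (simp add: DerI_Cons)

lemma DerI_add: "DerI (\<lambda>y z. \<delta>1 y z + \<delta>2 y z) w m = DerI \<delta>1 w m + DerI \<delta>2 w m"
  by (simp add: DerI_def sum.distrib)

lemma DerI_zero: "DerI (\<lambda>y z. 0) w m = 0"
  by (simp add: DerI_def)

lemma DerI_cong: "(\<And>y z. \<delta>1 y z = \<delta>2 y z) \<Longrightarrow> DerI \<delta>1 w m = DerI \<delta>2 w m"
  by (simp add: DerI_def)

lemma DerI_lmult: "DerI (\<lambda>y z. p * \<delta> y z) w m = p * DerI \<delta> w m"
  by (simp add: DerI_def sum_distrib_left)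
lemma DerI_rmult: "DerI (\<lambda>y z. \<delta> y z * p) w m = DerI \<delta> w m * p"
  by (simp add: DerI_def sum_distrib_right)

lemma DerI_red:
  assumes "\<And>x z. \<delta> x (gen_el (inv_l x) * z) + \<delta> (inv_l x) (z * gen_el x) = 0"
  shows "DerI \<delta> (red w) m = DerI \<delta> w m"
proof (induction w arbitrary: m)
  case (Cons x w)
  have cr: "DerI \<delta> (cr x r) m = DerI \<delta> (x # r) m" for r m
  proof (cases r)
    case (Cons y r')
    show ?thesis
    proof (cases "y = inv_l x")
      case True
      have "DerI \<delta> (x # r) m = (\<delta> x (gen_el (inv_l x) * (mono r' * m)) + \<delta> (inv_l x) ((mono r' * m) * gen_el x)) + DerI \<delta> r' m"
        using Cons True by (simp add: DerI_Cons mono_Cons mult.assoc gen_inv_assoc gen_inv)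
      also have "\<dots> = DerI \<delta> r' m" using assms by simp
      finally show ?thesis using Cons True by simp
    qed (use Cons in auto)
  qed simp
  have "DerI \<delta> (red (x # w)) m = DerI \<delta> (x # red w) m"
    by (simp add: red_Cons cr)
  also have "\<dots> = DerI \<delta> (x # w) m"
    by (simp add: DerI_Cons Cons mono_eq_red)
  finally show ?case .
qed simp

abbreviation lu where "lu \<equiv> L False False"
abbreviation lU where "lU \<equiv> L False True"
abbreviation lv where "lv \<equiv> L True False"
abbreviation lV where "lV \<equiv> L True True"

lemma letter_cases: "x = lu \<or> x = lU \<or> x = lv \<or> x = lV"
  by (cases x) auto

lemma gen_cancel[simp]:
  "gen_el (L g False) * gen_el (L g True) = 1"
  "gen_el (L g True) * gen_el (L g False) = 1"
  "gen_el (L g False) * (gen_el (L g True) * z) = z"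
  "gen_el (L g True) * (gen_el (L g False) * z) = z"
  using gen_inv[of "L g False"] gen_inv[of "L g True"] gen_inv_assoc[of "L g False"] gen_inv_assoc[of "L g True"]
  by auto

lemma gen_cancel2[simp]:
  "z * gen_el (L g False) * gen_el (L g True) = z"
  "z * gen_el (L g True) * gen_el (L g False) = z"
  by (simp_all add: mult.assoc)




lemma Kw_outer: "Kw a b m = DerW (\<lambda>y. Kw a [y] m) b"
  unfolding Kw_def DerW_def
  by (simp add: sum_distrib_left sum_distrib_right) (rule sum.swap)

lemma Kw_single2: "Kw a [y] m = DerI (\<lambda>x z. kl x y z) a m"
  unfolding Kw_def DerI_def by simp

lemma Kw_inner: "Kw a b m = DerI (\<lambda>x z. Kw [x] b z) a m"
  unfolding Kw_def DerI_def by simp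

lemma Kw_single1: "Kw [x] b z = DerW (\<lambda>y. kl x y z) b"
  unfolding Kw_def DerW_def by simp

lemma kl_cancel2: "kl x y z * gen_el (inv_l y) + gen_el y * kl x (inv_l y) z = 0"
  by (cases x; cases y; rename_tac a b c d; case_tac a; case_tac b; case_tac c; case_tac d)
     (simp_all add: kl_def mono_def mult.assoc cs_neg1)

lemma kl_cancel1: "kl x y (gen_el (inv_l x) * z) + kl (inv_l x) y (z * gen_el x) = 0"
  by (cases x; cases y; rename_tac a b c d; case_tac a; case_tac b; case_tac c; case_tac d)
     (simp_all add: kl_def mono_def mult.assoc cs_neg1)

lemma Kw_red2: "Kw a (red b) m = Kw a b m"
proof -
  have "Kw a [y] m * gen_el (inv_l y) + gen_el y * Kw a [inv_l y] m = 0" for y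
  proof -
    have "Kw a [y] m * gen_el (inv_l y) + gen_el y * Kw a [inv_l y] m
        = DerI (\<lambda>x z. kl x y z * gen_el (inv_l y) + gen_el y * kl x (inv_l y) z) a m"
      by (simp add: Kw_single2 DerI_add DerI_lmult DerI_rmult)
    also have "\<dots> = 0" by (simp add: kl_cancel2 DerI_zero)
    finally show ?thesis .
  qed
  then show ?thesis by (simp add: Kw_outer[of a "red b"] Kw_outer[of a b] DerW_red)
qed

lemma Kw_red1: "Kw (red a) b m = Kw a b m"
proof -
  have "Kw [x] b (gen_el (inv_l x) * z) + Kw [inv_l x] b (z * gen_el x) = 0" for x z
  proof -
    have "Kw [x] b (gen_el (inv_l x) * z) + Kw [inv_l x] b (z * gen_el x)
       = DerW (\<lambda>y. kl x y (gen_el (inv_l x) * z) + kl (inv_l x) y (z * gen_el x)) b"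
      by (simp add: Kw_single1 DerW_add)
    also have "\<dots> = 0" by (simp add: kl_cancel1 DerW_zero)
    finally show ?thesis .
  qed
  then show ?thesis by (simp add: Kw_inner[of "red a"] Kw_inner[of a] DerI_red)
qed

lemma Bw_red1: "Bw (red a) b = Bw a b" by (simp add: Bw_def Kw_red1)
lemma Bw_red2: "Bw a (red b) = Bw a b" by (simp add: Bw_def Kw_red2)

lemma brK_mono_eq: "brK (mono a) (mono b) = Bw a b"
  by (simp add: brK_mono Bw_red1 Bw_red2)

lemma Bw_append2: "Bw a (b @ c) = Bw a b * mono c + mono b * Bw a c"
  by (simp add: Bw_def Kw_outer[of a "b @ c"] Kw_outer[of a b] Kw_outer[of a c] DerW_append)

lemma Kw_append1: "Kw (a @ b) c m = Kw a c (mono b * m) + Kw b c (m * mono a)"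
  by (simp add: Kw_inner[of "a @ b"] Kw_inner[of a] Kw_inner[of b] DerI_append)

lemma Bw_cyc: "Bw (a @ b) c = Bw (b @ a) c"
  by (simp add: Bw_def Kw_append1 add.commute)

section \<open>Properties (2a) and (2b)\<close>

lemma brK_cs_mono1: "brK (f + cs k (mono w)) b = brK f b + cs k (brK (mono w) b)"
  by (simp add: brK_add1 brK_cs1)
lemma brK_cs_mono2: "brK a (f + cs k (mono w)) = brK a f + cs k (brK a (mono w))"
  by (simp add: brK_add2 brK_cs2)

lemma brK_deriv_mono: "brK (mono w) (b * c) = brK (mono w) b * c + b * brK (mono w) c"
proof (induction b rule: A_induct)
  case zero then show ?case by simp
next
  case (add f k w2)
  have base: "brK (mono w) (mono w2 * c) = brK (mono w) (mono w2) * c + mono w2 * brK (mono w) c"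
  proof (induction c rule: A_induct)
    case zero then show ?case by simp
  next
    case (add g k2 w3)
    have "brK (mono w) (mono w2 * mono w3) = brK (mono w) (mono w2) * mono w3 + mono w2 * brK (mono w) (mono w3)"
      by (simp add: mono_append[symmetric] brK_mono_eq Bw_append2)
    then show ?case using add
      by (simp add: distrib_left distrib_right brK_add2 brK_cs2 cs_mult_right cs_add algebra_simps)
  qed
  show ?case using add base
    by (simp add: distrib_left distrib_right brK_add2 brK_cs2 cs_mult_left cs_mult_right cs_add algebra_simps)
qed

lemma brK_deriv: "brK a (b * c) = brK a b * c + b * brK a c"
proof (induction a rule: A_induct)
  case zero then show ?case by simp
next
  case (add f k w)
  then show ?case
    by (simp add: brK_add1 brK_cs1 brK_deriv_mono distrib_left distrib_right cs_add cs_mult_left cs_mult_right algebra_simps)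
qed

lemma brK_cyc_mono: "brK (mono w1 * mono w2) c = brK (mono w2 * mono w1) c"
proof (induction c rule: A_induct)
  case zero then show ?case by simp
next
  case (add f k w3)
  then show ?case
    by (simp add: brK_add2 brK_cs2 mono_append[symmetric] brK_mono_eq Bw_cyc)
qed

lemma brK_cyc: "brK (a * b) c = brK (b * a) c"
proof (induction a rule: A_induct)
  case zero then show ?case by simp
next
  case (add f k w)
  have inner: "brK (mono w * b) c = brK (b * mono w) c"
  proof (induction b rule: A_induct)
    case zero then show ?case by simp
  next
    case (add g k2 w2)
    then show ?case
      by (simp add: distrib_left distrib_right brK_add1 brK_cs1 cs_mult_left cs_mult_right brK_cyc_mono)
  qed
  show ?case using add inner
    by (simp add: distrib_left distrib_right brK_add1 brK_cs1 cs_mult_left cs_mult_right)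
qed




definition linw :: "(letter list \<Rightarrow> A) \<Rightarrow> A \<Rightarrow> A" where
  "linw f y = lin (\<lambda>g. f (word g)) y"

lemma linw_mono: "(\<And>w. f (red w) = f w) \<Longrightarrow> linw f (mono w) = f w"
  by (simp add: linw_def lin_mono word_Abs_red)

lemma linw_add: "linw f (a + b) = linw f a + linw f b" by (simp add: linw_def lin_add)
lemma linw_cs: "linw f (cs c a) = cs c (linw f a)" by (simp add: linw_def lin_cs)
lemma linw_zero[simp]: "linw f 0 = 0" by (simp add: linw_def)
lemma linw_minus: "linw f (- a) = - linw f a"
  using linw_cs[of f "-1" a] by (simp add: cs_neg1)
lemma linw_diff: "linw f (a - b) = linw f a - linw f b"
  using linw_add[of f a "- b"] by (simp add: linw_minus)
lemma linw_sum: "linw f (sum g S) = (\<Sum>x\<in>S. linw f (g x))"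
  by (induction S rule: infinite_finite_induct) (auto simp: linw_add)
lemma linw_fun_add: "linw (\<lambda>w. f w + g w) a = linw f a + linw g a"
  by (simp add: linw_def lin_fun_add)
lemma linw_fun_cs: "linw (\<lambda>w. cs c (f w)) a = cs c (linw f a)"
  by (simp add: linw_def lin_fun_cs)
lemma linw_fun_zero[simp]: "linw (\<lambda>w. 0) a = 0"
  by (simp add: linw_def)
lemma linw_fun_minus: "linw (\<lambda>w. - f w) a = - linw f a"
  using linw_fun_cs[of "-1" f a] by (simp add: cs_neg1)
lemma linw_fun_diff: "linw (\<lambda>w. f w - g w) a = linw f a - linw g a"
  using linw_fun_add[of f "\<lambda>w. - g w" a] by (simp add: linw_fun_minus)

lemma linw_cong: "(\<And>w. f w = g w) \<Longrightarrow> linw f a = linw g a"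
  by (simp add: linw_def)

lemma A_eq:
  assumes "\<And>x y. F (x + y) = F x + F y" "\<And>c x. F (cs c x) = cs c (F x)"
    "\<And>x y. G (x + y) = G x + G y" "\<And>c x. G (cs c x) = cs c (G x)"
    "\<And>w. F (mono w) = G (mono w)"
  shows "F a = G a"
proof (induction a rule: A_induct)
  case zero
  have "F 0 = 0" using assms(2)[of 0 0] by simp
  moreover have "G 0 = 0" using assms(4)[of 0 0] by simp
  ultimately show ?case by simp
next
  case (add f c w) then show ?case using assms by simp
qed

definition dvl :: "letter \<Rightarrow> A \<Rightarrow> A" where
  "dvl x z = (if x = lv then gen_el lv * z else if x = lV then - (z * gen_el lV) else 0)"
definition dul :: "letter \<Rightarrow> A \<Rightarrow> A" where
  "dul x z = (if x = lu then gen_el lu * z else if x = lU then - (z * gen_el lU) else 0)"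

definition dv :: "letter list \<Rightarrow> A \<Rightarrow> A" where "dv w m = DerI dvl w m"
definition du :: "letter list \<Rightarrow> A \<Rightarrow> A" where "du w m = DerI dul w m"

lemma dvl_add: "dvl x (a + b) = dvl x a + dvl x b" by (simp add: dvl_def algebra_simps)
lemma dvl_cs: "dvl x (cs c a) = cs c (dvl x a)" by (simp add: dvl_def cs_mult_left cs_mult_right cs_minus)
lemma dul_add: "dul x (a + b) = dul x a + dul x b" by (simp add: dul_def algebra_simps)
lemma dul_cs: "dul x (cs c a) = cs c (dul x a)" by (simp add: dul_def cs_mult_left cs_mult_right cs_minus)

lemma dv_add: "dv w (a + b) = dv w a + dv w b"
  by (simp add: dv_def DerI_def algebra_simps dvl_add sum.distrib)
lemma dv_cs: "dv w (cs c a) = cs c (dv w a)"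
  by (simp add: dv_def DerI_def cs_mult_left cs_mult_right dvl_cs cs_sum)
lemma du_add: "du w (a + b) = du w a + du w b"
  by (simp add: du_def DerI_def algebra_simps dul_add sum.distrib)
lemma du_cs: "du w (cs c a) = cs c (du w a)"
  by (simp add: du_def DerI_def cs_mult_left cs_mult_right dul_cs cs_sum)
lemma dv_zero[simp]: "dv w 0 = 0" using dv_cs[of w 0 0] by simp
lemma du_zero[simp]: "du w 0 = 0" using du_cs[of w 0 0] by simp
lemma dv_minus: "dv w (- a) = - dv w a" using dv_cs[of w "-1" a] by (simp add: cs_neg1)
lemma du_minus: "du w (- a) = - du w a" using du_cs[of w "-1" a] by (simp add: cs_neg1)
lemma dv_diff: "dv w (a - b) = dv w a - dv w b" using dv_add[of w a "-b"] by (simp add: dv_minus)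
lemma du_diff: "du w (a - b) = du w a - du w b" using du_add[of w a "-b"] by (simp add: du_minus)

lemma dvl_cancel: "dvl x (gen_el (inv_l x) * z) + dvl (inv_l x) (z * gen_el x) = 0"
  by (cases x; rename_tac a b; case_tac a; case_tac b) (simp_all add: dvl_def mult.assoc)
lemma dul_cancel: "dul x (gen_el (inv_l x) * z) + dul (inv_l x) (z * gen_el x) = 0"
  by (cases x; rename_tac a b; case_tac a; case_tac b) (simp_all add: dul_def mult.assoc)

lemma dv_red: "dv (red w) m = dv w m" by (simp add: dv_def DerI_red dvl_cancel)
lemma du_red: "du (red w) m = du w m" by (simp add: du_def DerI_red dul_cancel)

lemma dv_append: "dv (a @ b) m = dv a (mono b * m) + dv b (m * mono a)"
  by (simp add: dv_def DerI_append)
lemma du_append: "du (a @ b) m = du a (mono b * m) + du b (m * mono a)"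
  by (simp add: du_def DerI_append)

definition PhiV :: "A \<Rightarrow> A" where "PhiV y = linw (\<lambda>w. dv w 1) y"
definition PhiU :: "A \<Rightarrow> A" where "PhiU y = linw (\<lambda>w. du w 1) y"
definition DvA :: "A \<Rightarrow> A \<Rightarrow> A" where "DvA y m = linw (\<lambda>w. dv w m) y"

lemma PhiV_mono: "PhiV (mono w) = dv w 1" by (simp add: PhiV_def linw_mono dv_red)
lemma PhiU_mono: "PhiU (mono w) = du w 1" by (simp add: PhiU_def linw_mono du_red)
lemma DvA_mono: "DvA (mono w) m = dv w m" by (simp add: DvA_def linw_mono dv_red)

lemma DvA_add1: "DvA (a + b) m = DvA a m + DvA b m" by (simp add: DvA_def linw_add)
lemma DvA_cs1: "DvA (cs c a) m = cs c (DvA a m)" by (simp add: DvA_def linw_cs)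
lemma DvA_add2: "DvA y (a + b) = DvA y a + DvA y b" by (simp add: DvA_def dv_add linw_fun_add)
lemma DvA_cs2: "DvA y (cs c a) = cs c (DvA y a)" by (simp add: DvA_def dv_cs linw_fun_cs)
lemma DvA_zero1[simp]: "DvA 0 m = 0" by (simp add: DvA_def)
lemma DvA_zero2[simp]: "DvA y 0 = 0" by (simp add: DvA_def)

lemma DvA_deriv_mono2: "DvA (mono w * y) m = DvA (mono w) (y * m) + DvA y (m * mono w)"
proof -
  have "(\<lambda>y. DvA (mono w * y) m) y = (\<lambda>y. DvA (mono w) (y * m) + DvA y (m * mono w)) y"
  proof (rule A_eq[where F = "\<lambda>y. DvA (mono w * y) m"])
    fix w2
    show "DvA (mono w * mono w2) m = DvA (mono w) (mono w2 * m) + DvA (mono w2) (m * mono w)"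
      by (simp add: mono_append[symmetric] DvA_mono dv_append)
  qed (simp_all add: distrib_left distrib_right DvA_add1 DvA_add2 DvA_cs1 DvA_cs2 cs_mult_left cs_mult_right cs_add)
  then show ?thesis by simp
qed

lemma DvA_deriv: "DvA (x * y) m = DvA x (y * m) + DvA y (m * x)"
proof -
  have "(\<lambda>x. DvA (x * y) m) x = (\<lambda>x. DvA x (y * m) + DvA y (m * x)) x"
  proof (rule A_eq[where F = "\<lambda>x. DvA (x * y) m"])
    fix w show "DvA (mono w * y) m = DvA (mono w) (y * m) + DvA y (m * mono w)"
      by (rule DvA_deriv_mono2)
  qed (simp_all add: distrib_left distrib_right DvA_add1 DvA_add2 DvA_cs1 DvA_cs2 cs_mult_left cs_mult_right cs_add)
  then show ?thesis by simp
qed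

lemma kl_add: "kl x y (a + b) = kl x y a + kl x y b"
  by (auto simp: kl_def algebra_simps cs_add split: option.split)
lemma kl_cs: "kl x y (cs c a) = cs c (kl x y a)"
  by (auto simp: kl_def cs_mult_left cs_mult_right cs_cs mult.commute split: option.split)

lemma Kw_add: "Kw q w (a + b) = Kw q w a + Kw q w b"
  by (simp add: Kw_def kl_add algebra_simps sum.distrib)
lemma Kw_cs: "Kw q w (cs c a) = cs c (Kw q w a)"
  by (simp add: Kw_def kl_cs cs_mult_left cs_mult_right cs_sum)

definition KY :: "letter list \<Rightarrow> A \<Rightarrow> A \<Rightarrow> A" where "KY q y m = linw (\<lambda>w. Kw q w m) y"

lemma KY_mono: "KY q (mono w) m = Kw q w m" by (simp add: KY_def linw_mono Kw_red2)
lemma KY_add1: "KY q (a + b) m = KY q a m + KY q b m" by (simp add: KY_def linw_add)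
lemma KY_cs1: "KY q (cs c a) m = cs c (KY q a m)" by (simp add: KY_def linw_cs)
lemma KY_add2: "KY q y (a + b) = KY q y a + KY q y b" by (simp add: KY_def Kw_add linw_fun_add)
lemma KY_cs2: "KY q y (cs c a) = cs c (KY q y a)" by (simp add: KY_def Kw_cs linw_fun_cs)
lemma KY_append: "KY (q1 @ q2) y m = KY q1 y (mono q2 * m) + KY q2 y (m * mono q1)"
  by (simp add: KY_def Kw_append1 linw_fun_add)
lemma KY_one: "KY q y 1 = brK (mono q) y"
  by (simp add: KY_def brK_lin lin_mono linw_def Bw_def[symmetric] Bw_red1 word_Abs_red)

lemma KY_Nil[simp]: "KY [] y m = 0" by (simp add: KY_def Kw_def)

lemma brK_one: "brK a 1 = 0"
proof -
  have "brK a (1 * 1) = brK a 1 * 1 + 1 * brK a 1" by (rule brK_deriv)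
  then show ?thesis by simp
qed

lemma kl_lu: "kl x lu z = gen_el lu * dvl x z"
  by (cases x; rename_tac a b; case_tac a; case_tac b) (simp_all add: kl_def dvl_def mono_def mult.assoc cs_neg1)
lemma kl_lv: "kl x lv z = - (gen_el lv * dul x z)"
  by (cases x; rename_tac a b; case_tac a; case_tac b) (simp_all add: kl_def dul_def mono_def mult.assoc cs_neg1)

lemma Bw_lu: "Bw q [lu] = gen_el lu * dv q 1"
  by (simp add: Bw_def Kw_single2 kl_lu DerI_lmult dv_def)
lemma Bw_lv: "Bw q [lv] = - (gen_el lv * du q 1)"
proof -
  have "Bw q [lv] = DerI (\<lambda>x z. gen_el lv * (- dul x z)) q 1"
    by (simp add: Bw_def Kw_single2 kl_lv)
  also have "\<dots> = gen_el lv * DerI (\<lambda>x z. - dul x z) q 1" by (rule DerI_lmult)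
  also have "DerI (\<lambda>x z. - dul x z) q 1 = - du q 1"
    by (simp add: DerI_def du_def sum_negf)
  finally show ?thesis by simp
qed

lemma brK_lu: "brK y (gen_el lu) = gen_el lu * PhiV y"
proof -
  have "(\<lambda>y. brK y (mono [lu])) y = (\<lambda>y. gen_el lu * PhiV y) y"
  proof (rule A_eq[where F = "\<lambda>y. brK y (mono [lu])"])
    fix w show "brK (mono w) (mono [lu]) = gen_el lu * PhiV (mono w)"
      using brK_mono_eq[of w "[lu]"] by (simp add: Bw_lu PhiV_mono)
  qed (simp_all add: brK_add1 brK_cs1 PhiV_def linw_add linw_cs distrib_left cs_mult_right)
  then show ?thesis by simp
qed

lemma brK_lv: "brK y (gen_el lv) = - (gen_el lv * PhiU y)"
proof -
  have "(\<lambda>y. brK y (mono [lv])) y = (\<lambda>y. - (gen_el lv * PhiU y)) y"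
  proof (rule A_eq[where F = "\<lambda>y. brK y (mono [lv])"])
    fix w show "brK (mono w) (mono [lv]) = - (gen_el lv * PhiU (mono w))"
      using brK_mono_eq[of w "[lv]"] by (simp add: Bw_lv PhiU_mono)
  qed (simp_all add: brK_add1 brK_cs1 PhiU_def linw_add linw_cs distrib_left cs_mult_right cs_minus)
  then show ?thesis by simp
qed

lemma deriv_zero:
  assumes add: "\<And>x y. D (x + y) = D x + D y" and hom: "\<And>c x. D (cs c x) = cs c (D x)"
    and der: "\<And>x y. D (x * y) = D x * y + x * D y"
    and gu: "D (gen_el lu) = 0" and gv: "D (gen_el lv) = 0"
  shows "D a = 0"
proof -
  have one: "D 1 = 0" using der[of 1 1] by simp
  have inv: "D (gen_el (L g True)) = 0" if "D (gen_el (L g False)) = 0" for g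
  proof -
    have "D (gen_el (L g False) * gen_el (L g True)) = D (gen_el (L g False)) * gen_el (L g True) + gen_el (L g False) * D (gen_el (L g True))"
      by (rule der)
    then have "gen_el (L g False) * D (gen_el (L g True)) = 0" using that one by simp
    then have "gen_el (L g True) * (gen_el (L g False) * D (gen_el (L g True))) = 0" by simp
    then show ?thesis by simp
  qed
  have gen: "D (gen_el x) = 0" for x
  proof (cases x)
    case (L g e)
    have "D (gen_el (L g False)) = 0" using gu gv by (cases g) auto
    then show ?thesis using L inv by (cases e) auto
  qed
  have mns: "D (mono w) = 0" for w
    by (induction w) (simp_all add: one mono_Cons der gen)
  have "(\<lambda>a. D a) a = (\<lambda>a. 0) a"
    by (rule A_eq) (simp_all add: add hom mns)
  then show ?thesis by simp
qed




section \<open>Reduction of the Jacobi-type identity\<close>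

definition JJ :: "A \<Rightarrow> A \<Rightarrow> A \<Rightarrow> A" where
  "JJ a b c = brK a (brK b c) - brK b (brK a c) - brK (brK a b) c"

definition GG :: "A \<Rightarrow> A \<Rightarrow> A" where
  "GG P Q = PhiV P * PhiV Q - PhiV Q * PhiV P + brK P (PhiV Q) - brK Q (PhiV P) - PhiV (brK P Q)"

lemma JJ_lu: "JJ P Q (gen_el lu) = gen_el lu * GG P Q"
  by (simp add: JJ_def GG_def brK_lu brK_deriv algebra_simps)

lemma JJ_deriv: "JJ a b (x * y) = JJ a b x * y + x * JJ a b y"
  by (simp add: JJ_def brK_deriv brK_add2 algebra_simps)

lemma brK_diff2: "brK a (b - b') = brK a b - brK a b'"
  using brK_add2[of a "b - b'" b'] by simp
lemma brK_diff1: "brK (a - a') b = brK a b - brK a' b"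
  using brK_add1[of "a - a'" a' b] by simp

lemma JJ_add3: "JJ a b (x + y) = JJ a b x + JJ a b y"
  by (simp add: JJ_def brK_add2 brK_add1 algebra_simps)
lemma JJ_cs3: "JJ a b (cs c x) = cs c (JJ a b x)"
  by (simp add: JJ_def brK_cs2 cs_diff)
lemma JJ_add1: "JJ (a + a') b x = JJ a b x + JJ a' b x"
  by (simp add: JJ_def brK_add2 brK_add1 algebra_simps)
lemma JJ_cs1: "JJ (cs c a) b x = cs c (JJ a b x)"
  by (simp add: JJ_def brK_cs2 brK_cs1 cs_diff)
lemma JJ_add2: "JJ a (b + b') x = JJ a b x + JJ a b' x"
  by (simp add: JJ_def brK_add2 brK_add1 algebra_simps)
lemma JJ_cs2: "JJ a (cs c b) x = cs c (JJ a b x)"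
  by (simp add: JJ_def brK_cs2 brK_cs1 cs_diff)

lemma JJ_from_gens:
  assumes "\<And>p q. JJ (mono p) (mono q) (gen_el lu) = 0" "\<And>p q. JJ (mono p) (mono q) (gen_el lv) = 0"
  shows "JJ a b x = 0"
proof -
  have mm: "JJ (mono p) (mono q) x = 0" for p q
    by (rule deriv_zero[where D = "JJ (mono p) (mono q)"]) (simp_all add: JJ_add3 JJ_cs3 JJ_deriv assms)
  have m1: "JJ (mono p) b x = 0" for p
  proof -
    have "(\<lambda>b. JJ (mono p) b x) b = (\<lambda>b. 0) b"
      by (rule A_eq) (simp_all add: JJ_add2 JJ_cs2 mm)
    then show ?thesis by simp
  qed
  have "(\<lambda>a. JJ a b x) a = (\<lambda>a. 0) a"
    by (rule A_eq) (simp_all add: JJ_add1 JJ_cs1 m1)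
  then show ?thesis by simp
qed

definition Gam :: "letter list \<Rightarrow> letter list \<Rightarrow> A \<Rightarrow> A" where
  "Gam p q m = PhiV (mono p) * dv q m - dv q m * PhiV (mono p) + brK (mono p) (dv q m)
     - dv q (brK (mono p) m) - KY q (PhiV (mono p)) m - DvA (brK (mono p) (mono q)) m"

lemma DvA_one: "DvA y 1 = PhiV y" by (simp add: DvA_def PhiV_def)

lemma Gam_one: "Gam p q 1 = GG (mono p) (mono q)"
  by (simp add: Gam_def GG_def PhiV_mono[symmetric] brK_one KY_one DvA_one)

lemma Gam_Nil: "Gam p [] m = 0"
  by (simp add: Gam_def brK_one dv_def)

lemma Gam_append: "Gam p (q1 @ q2) m = Gam p q1 (mono q2 * m) + Gam p q2 (m * mono q1)"
proof -
  let ?P = "mono p" and ?Q1 = "mono q1" and ?Q2 = "mono q2"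
  have b: "brK ?P (mono (q1 @ q2)) = brK ?P ?Q1 * ?Q2 + ?Q1 * brK ?P ?Q2"
    by (simp add: mono_append brK_deriv)
  have d: "DvA (brK ?P (mono (q1 @ q2))) m = DvA (brK ?P ?Q1) (?Q2 * m) + dv q2 (m * brK ?P ?Q1)
            + dv q1 (brK ?P ?Q2 * m) + DvA (brK ?P ?Q2) (m * ?Q1)"
    by (simp add: b DvA_add1 DvA_deriv DvA_mono)
  show ?thesis
    by (simp add: Gam_def d dv_append KY_append brK_add2 brK_deriv dv_add algebra_simps)
qed

lemma red_cancel2: "red [x, inv_l x] = []"
  by (simp add: red_def)

lemma Gam_cancel: "Gam p [x, inv_l x] m = 0"
proof -
  have "dv [x, inv_l x] z = 0" for z using dv_red[of "[x, inv_l x]" z] by (simp add: red_cancel2 dv_def)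
  moreover have "KY [x, inv_l x] y z = 0" for y z
    using Kw_red1[of "[x, inv_l x]"] by (simp add: KY_def red_cancel2 Kw_def)
  moreover have "mono [x, inv_l x] = 1" by (simp add: mono_def gen_inv)
  ultimately show ?thesis by (simp add: Gam_def brK_one)
qed

lemma Gam_gens:
  assumes u: "\<And>z. Gam p [lu] z = E (z * gen_el lu) - E (gen_el lu * z)"
      and v: "\<And>z. Gam p [lv] z = E (z * gen_el lv) - E (gen_el lv * z)"
  shows "Gam p q z = E (z * mono q) - E (mono q * z)"
proof -
  have pos: "Gam p [L g False] z = E (z * gen_el (L g False)) - E (gen_el (L g False) * z)" for g z
    using u v by (cases g) auto
  have neg: "Gam p [L g True] z = E (z * gen_el (L g True)) - E (gen_el (L g True) * z)" for g z
  proof -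
    let ?x = "L g False" and ?y = "L g True"
    have "Gam p [?x, ?y] (z * gen_el ?y) = 0" using Gam_cancel[of p ?x] by simp
    then have "Gam p [?x] (gen_el ?y * (z * gen_el ?y)) + Gam p [?y] (z * gen_el ?y * gen_el ?x) = 0"
      using Gam_append[of p "[?x]" "[?y]"] by simp
    then have "Gam p [?y] z = - Gam p [?x] (gen_el ?y * (z * gen_el ?y))"
      by (simp add: mult.assoc eq_neg_iff_add_eq_0 add.commute)
    also have "\<dots> = E (z * gen_el ?y) - E (gen_el ?y * z)"
      by (simp add: pos mult.assoc)
    finally show ?thesis .
  qed
  have single: "Gam p [x] z = E (z * gen_el x) - E (gen_el x * z)" for x z
    by (cases x; rename_tac g e; case_tac e) (simp_all add: pos neg)
  show ?thesis
  proof (induction q arbitrary: z)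
    case Nil then show ?case by (simp add: Gam_Nil)
  next
    case (Cons x q)
    have "Gam p (x # q) z = Gam p [x] (mono q * z) + Gam p q (z * gen_el x)"
      using Gam_append[of p "[x]" q z] by simp
    also have "\<dots> = E (z * mono (x # q)) - E (mono (x # q) * z)"
      by (simp add: single Cons mono_Cons mult.assoc)
    finally show ?case .
  qed
qed

lemma GG_zero_from:
  assumes "\<And>z. Gam p [lu] z = E (z * gen_el lu) - E (gen_el lu * z)"
      and "\<And>z. Gam p [lv] z = E (z * gen_el lv) - E (gen_el lv * z)"
  shows "GG (mono p) (mono q) = 0"
  using Gam_gens[OF assms, of q 1] by (simp add: Gam_one)




declare rotate_Suc[simp del]

definition CS :: "(letter list \<Rightarrow> A) \<Rightarrow> letter list \<Rightarrow> A" where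
  "CS H p = (\<Sum>k<length p. H (rotate k p))"

lemma CS_add: "CS (\<lambda>r. F r + G r) p = CS F p + CS G p" by (simp add: CS_def sum.distrib)
lemma CS_diff: "CS (\<lambda>r. F r - G r) p = CS F p - CS G p" by (simp add: CS_def sum_subtractf)
lemma CS_minus: "CS (\<lambda>r. - F r) p = - CS F p" by (simp add: CS_def sum_negf)
lemma CS_zero: "(\<And>r. r \<noteq> [] \<Longrightarrow> F r = 0) \<Longrightarrow> CS F p = 0"
  unfolding CS_def by (rule sum.neutral) (metis lessThan_iff less_nat_zero_code list.size(3) rotate_is_Nil_conv)
lemma CS_cong: "(\<And>r. r \<noteq> [] \<Longrightarrow> F r = G r) \<Longrightarrow> CS F p = CS G p"
  unfolding CS_def by (rule sum.cong) (auto, metis lessThan_iff less_nat_zero_code list.size(3) rotate_is_Nil_conv)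

lemma rotate_nth_cons: "k < length p \<Longrightarrow> rotate k p = p ! k # (drop (Suc k) p @ take k p)"
  by (simp add: rotate_drop_take Cons_nth_drop_Suc)

lemma rotate_Suc_cons: "t \<le> length w \<Longrightarrow> rotate (Suc t) (x # w) = drop t w @ x # take t w"
proof (cases "t = length w")
  case True
  have "rotate (Suc t) (x # w) = rotate (length (x # w)) (x # w)" using True by simp
  also have "\<dots> = x # w" by (rule rotate_id) simp
  finally show ?thesis using True by simp
next
  case False
  assume "t \<le> length w"
  with False have "t < length w" by simp
  then show ?thesis by (simp add: rotate_drop_take)
qed

lemma mod_shift1:
  fixes n :: nat
  assumes "0 < n"
  shows "(\<Sum>j<n. g ((j + 1) mod n)) = (\<Sum>j<n. (g j :: A))"
proof -
  obtain m where n: "n = Suc m" using assms by (cases n) auto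
  have "(\<Sum>j<Suc m. g ((j + 1) mod Suc m)) = (\<Sum>j<m. g ((j + 1) mod Suc m)) + g 0"
    by simp
  also have "(\<Sum>j<m. g ((j + 1) mod Suc m)) = (\<Sum>j<m. g (Suc j))"
    by (rule sum.cong) auto
  also have "(\<Sum>j<m. g (Suc j)) + g 0 = (\<Sum>j<Suc m. g j)"
    by (simp add: sum.lessThan_Suc_shift del: sum.lessThan_Suc)
  finally show ?thesis using n by simp
qed

lemma mod_shift:
  fixes n s :: nat
  assumes "0 < n"
  shows "(\<Sum>j<n. g ((j + s) mod n)) = (\<Sum>j<n. (g j :: A))"
proof (induction s arbitrary: g)
  case 0 then show ?case by (intro sum.cong) auto
next
  case (Suc s)
  have "(\<Sum>j<n. g ((j + Suc s) mod n)) = (\<Sum>j<n. (\<lambda>i. g ((i + s) mod n)) ((j + 1) mod n))"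
    by (intro sum.cong refl) (simp add: mod_add_left_eq)
  also have "\<dots> = (\<Sum>j<n. g ((j + s) mod n))" by (rule mod_shift1[OF assms])
  also have "\<dots> = (\<Sum>j<n. g j)" by (rule Suc)
  finally show ?case .
qed

lemma sum_reindex2:
  fixes n :: nat
  shows "(\<Sum>c<n. \<Sum>k<n. (G c k :: A)) = (\<Sum>j<n. \<Sum>t<n. G ((j + t + 1) mod n) (n - 1 - t))"
proof (cases "n = 0")
  case False
  then have n: "0 < n" by simp
  have "(\<Sum>j<n. \<Sum>t<n. G ((j + t + 1) mod n) (n - 1 - t)) = (\<Sum>t<n. \<Sum>j<n. G ((j + (t + 1)) mod n) (n - 1 - t))"
    by (subst sum.swap) (simp add: add.assoc)
  also have "\<dots> = (\<Sum>t<n. \<Sum>c<n. G c (n - 1 - t))"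
  proof (rule sum.cong[OF refl])
    fix t show "(\<Sum>j<n. G ((j + (t + 1)) mod n) (n - 1 - t)) = (\<Sum>c<n. G c (n - 1 - t))"
      using mod_shift[OF n, of "\<lambda>c. G c (n - 1 - t)" "t + 1"] by simp
  qed
  also have "\<dots> = (\<Sum>c<n. \<Sum>t<n. G c (n - Suc t))"
    by (subst sum.swap) simp
  also have "\<dots> = (\<Sum>c<n. \<Sum>k<n. G c k)"
    by (rule sum.cong[OF refl]) (rule sum.nat_diff_reindex)
  finally show ?thesis by simp
qed simp

lemma last_rotate_Suc: "k < length p \<Longrightarrow> last (rotate (Suc k) p) = p ! k"
proof -
  assume k: "k < length p"
  show ?thesis
  proof (cases "Suc k = length p")
    case True
    then have "rotate (Suc k) p = p" by (simp add: rotate_id)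
    moreover have "p \<noteq> []" using k by auto
    moreover have "length p - 1 = k" using True by simp
    ultimately show ?thesis by (simp add: last_conv_nth)
  next
    case False
    then have "Suc k < length p" using k by simp
    then show ?thesis
      by (simp add: rotate_drop_take last_append take_Suc_conv_app_nth[OF k])
  qed
qed

lemma CS_shift:
  "(\<Sum>k<length p. F (p ! k) (rotate (Suc k) p)) = CS (\<lambda>r. F (last r) r) p"
proof (cases "p = []")
  case False
  let ?n = "length p"
  define h where "h j = F (last (rotate j p)) (rotate j p)" for j
  have "(\<Sum>k<?n. F (p ! k) (rotate (Suc k) p)) = (\<Sum>k<?n. h (Suc k))"
    by (intro sum.cong refl) (simp add: h_def last_rotate_Suc)
  also have "\<dots> = (\<Sum>k<Suc ?n. h k) - h 0"
    by (simp add: sum.lessThan_Suc_shift del: sum.lessThan_Suc)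
  also have "\<dots> = (\<Sum>k<?n. h k) + h ?n - h 0" by simp
  also have "h ?n = h 0" by (simp add: h_def)
  finally show ?thesis by (simp add: CS_def h_def)
qed (simp add: CS_def)

lemma CS_shift_hd:
  "CS (\<lambda>r. F (hd r) (rotate 1 r)) p = CS (\<lambda>r. F (last r) r) p"
proof -
  have "CS (\<lambda>r. F (hd r) (rotate 1 r)) p = (\<Sum>k<length p. F (p ! k) (rotate (Suc k) p))"
    unfolding CS_def
  proof (rule sum.cong[OF refl])
    fix k assume "k \<in> {..<length p}"
    then have "hd (rotate k p) = p ! k" by (simp add: rotate_nth_cons)
    moreover have "rotate 1 (rotate k p) = rotate (Suc k) p" by (simp add: rotate_rotate)
    ultimately show "F (hd (rotate k p)) (rotate 1 (rotate k p)) = F (p ! k) (rotate (Suc k) p)" by simp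
  qed
  then show ?thesis by (simp add: CS_shift)
qed

definition sws :: "(letter list \<Rightarrow> A) \<Rightarrow> letter list \<Rightarrow> A \<Rightarrow> A" where
  "sws F r m = (\<Sum>t<length r. F (rotate (Suc t) r) * dvl (hd r) (mono (take t (tl r)) * m * mono (drop t (tl r))))"

lemma CS_swap: "CS (\<lambda>r. F r * dv r m) p = CS (\<lambda>r. sws F r m) p"
proof -
  let ?n = "length p"
  define G where "G c k = F (rotate c p) * dvl (rotate c p ! k) (mono (drop (Suc k) (rotate c p)) * m * mono (take k (rotate c p)))" for c k
  have lhs: "CS (\<lambda>r. F r * dv r m) p = (\<Sum>c<?n. \<Sum>k<?n. G c k)"
    by (simp add: CS_def G_def dv_def DerI_def sum_distrib_left)
  have key: "G ((j + t + 1) mod ?n) (?n - 1 - t) =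
      F (rotate (Suc t) (rotate j p)) * dvl (hd (rotate j p)) (mono (take t (tl (rotate j p))) * m * mono (drop t (tl (rotate j p))))"
    if j: "j < ?n" and t: "t < ?n" for j t
  proof -
    define w where "w = drop (Suc j) p @ take j p"
    have rj: "rotate j p = p ! j # w" using j by (simp add: rotate_nth_cons w_def)
    have lw: "length w = ?n - 1" using j by (simp add: w_def)
    have rc: "rotate ((j + t + 1) mod ?n) p = drop t w @ p ! j # take t w"
    proof -
      have "rotate ((j + t + 1) mod ?n) p = rotate (Suc t + j) p"
        by (simp add: rotate_conv_mod[symmetric] add.commute)
      also have "\<dots> = rotate (Suc t) (rotate j p)" by (simp add: rotate_rotate)
      also have "\<dots> = drop t w @ p ! j # take t w" using rj lw t by (simp add: rotate_Suc_cons)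
      finally show ?thesis .
    qed
    have k: "?n - 1 - t = length (drop t w)" using lw t by simp
    have "G ((j + t + 1) mod ?n) (?n - 1 - t) = F (drop t w @ p ! j # take t w) * dvl (p ! j) (mono (take t w) * m * mono (drop t w))"
      unfolding G_def rc k by (simp add: nth_append)
    also have "drop t w @ p ! j # take t w = rotate (Suc t) (rotate j p)"
      using rj lw t by (simp add: rotate_Suc_cons)
    finally show ?thesis using rj by simp
  qed
  have "(\<Sum>c<?n. \<Sum>k<?n. G c k) = (\<Sum>j<?n. \<Sum>t<?n. G ((j + t + 1) mod ?n) (?n - 1 - t))"
    by (rule sum_reindex2)
  also have "\<dots> = (\<Sum>j<?n. \<Sum>t<?n. F (rotate (Suc t) (rotate j p)) * dvl (hd (rotate j p)) (mono (take t (tl (rotate j p))) * m * mono (drop t (tl (rotate j p)))))"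
  proof (rule sum.cong[OF refl], rule sum.cong[OF refl])
    fix j t assume "j \<in> {..<?n}" "t \<in> {..<?n}"
    then show "G ((j + t + 1) mod ?n) (?n - 1 - t) = F (rotate (Suc t) (rotate j p)) * dvl (hd (rotate j p)) (mono (take t (tl (rotate j p))) * m * mono (drop t (tl (rotate j p))))"
      by (intro key) auto
  qed
  also have "\<dots> = CS (\<lambda>r. sws F r m) p"
    unfolding CS_def sws_def by simp
  finally show ?thesis using lhs by simp
qed




definition hdt :: "letter \<Rightarrow> letter list \<Rightarrow> nat \<Rightarrow> letter" where
  "hdt x w t = (if t < length w then w ! t else x)"
definition lastt :: "letter \<Rightarrow> letter list \<Rightarrow> nat \<Rightarrow> letter" where
  "lastt e w t = (if t = 0 then e else w ! (t - 1))"

lemma of_int_left: "(a::A) * (of_int c * b) = of_int c * (a * b)"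
  by (metis mult.assoc mult_of_int_commute)

definition CT :: "(letter \<Rightarrow> letter \<Rightarrow> int) \<Rightarrow> letter \<Rightarrow> letter \<Rightarrow> letter list \<Rightarrow> A \<Rightarrow> A" where
  "CT f x e w m = (\<Sum>t<Suc (length w). of_int (f (hdt x w t) (lastt e w t)) * dvl x (mono (take t w) * m * mono (drop t w)))"

lemma sws_CT: "sws (\<lambda>r. of_int (f (hd r) (last r))) (x # w) m = CT f x x w m"
  unfolding sws_def CT_def length_Cons
proof (rule sum.cong[OF refl])
  fix t assume "t \<in> {..<Suc (length w)}"
  then have t: "t \<le> length w" by simp
  have r: "rotate (Suc t) (x # w) = drop t w @ x # take t w" using t by (rule rotate_Suc_cons)
  have h: "hd (drop t w @ x # take t w) = hdt x w t"
    using t by (auto simp: hdt_def hd_append hd_drop_conv_nth)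
  have l: "last (drop t w @ x # take t w) = lastt x w t"
    using t by (auto simp: lastt_def last_append last_conv_nth min_def)
  show "of_int (f (hd (rotate (Suc t) (x # w))) (last (rotate (Suc t) (x # w)))) *
        dvl (hd (x # w)) (mono (take t (tl (x # w))) * m * mono (drop t (tl (x # w)))) =
        of_int (f (hdt x w t) (lastt x w t)) * dvl x (mono (take t w) * m * mono (drop t w))"
    by (simp add: r h l)
qed

lemma CT_split_last:
  "CT f x e w m = (\<Sum>t<length w. of_int (f (hdt x w t) (lastt e w t)) * dvl x (mono (take t w) * m * mono (drop t w)))
      + of_int (f x (lastt e w (length w))) * dvl x (mono w * m)"
  unfolding CT_def by (simp add: hdt_def)

lemma CT_snoc:
  "CT f x e (w @ [y]) m = (\<Sum>t<length w. of_int (f (hdt x w t) (lastt e w t)) * dvl x (mono (take t w) * m * mono (drop t w) * gen_el y))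
      + of_int (f y (lastt e w (length w))) * dvl x (mono w * m * gen_el y)
      + of_int (f x y) * dvl x (mono w * gen_el y * m)"
proof -
  have "CT f x e (w @ [y]) m = (\<Sum>t<Suc (length w). of_int (f (hdt x (w @ [y]) t) (lastt e (w @ [y]) t)) * dvl x (mono (take t (w @ [y])) * m * mono (drop t (w @ [y]))))
      + of_int (f (hdt x (w @ [y]) (Suc (length w))) (lastt e (w @ [y]) (Suc (length w)))) * dvl x (mono (w @ [y]) * m)"
    unfolding CT_def by simp
  also have "(\<Sum>t<Suc (length w). of_int (f (hdt x (w @ [y]) t) (lastt e (w @ [y]) t)) * dvl x (mono (take t (w @ [y])) * m * mono (drop t (w @ [y]))))
     = (\<Sum>t<length w. of_int (f (hdt x w t) (lastt e w t)) * dvl x (mono (take t w) * m * mono (drop t w) * gen_el y))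
       + of_int (f y (lastt e w (length w))) * dvl x (mono w * m * gen_el y)"
  proof -
    have "(\<Sum>t<Suc (length w). of_int (f (hdt x (w @ [y]) t) (lastt e (w @ [y]) t)) * dvl x (mono (take t (w @ [y])) * m * mono (drop t (w @ [y]))))
      = (\<Sum>t<length w. of_int (f (hdt x (w @ [y]) t) (lastt e (w @ [y]) t)) * dvl x (mono (take t (w @ [y])) * m * mono (drop t (w @ [y]))))
        + of_int (f (hdt x (w @ [y]) (length w)) (lastt e (w @ [y]) (length w))) * dvl x (mono (take (length w) (w @ [y])) * m * mono (drop (length w) (w @ [y])))"
      by simp
    also have "(\<Sum>t<length w. of_int (f (hdt x (w @ [y]) t) (lastt e (w @ [y]) t)) * dvl x (mono (take t (w @ [y])) * m * mono (drop t (w @ [y]))))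
       = (\<Sum>t<length w. of_int (f (hdt x w t) (lastt e w t)) * dvl x (mono (take t w) * m * mono (drop t w) * gen_el y))"
      by (rule sum.cong) (auto simp: hdt_def lastt_def nth_append mono_append mult.assoc)
    also have "of_int (f (hdt x (w @ [y]) (length w)) (lastt e (w @ [y]) (length w))) * dvl x (mono (take (length w) (w @ [y])) * m * mono (drop (length w) (w @ [y])))
       = of_int (f y (lastt e w (length w))) * dvl x (mono w * m * gen_el y)"
      by (simp add: hdt_def lastt_def nth_append)
    finally show ?thesis .
  qed
  also have "of_int (f (hdt x (w @ [y]) (Suc (length w))) (lastt e (w @ [y]) (Suc (length w)))) * dvl x (mono (w @ [y]) * m)
      = of_int (f x y) * dvl x (mono w * gen_el y * m)"
    by (simp add: hdt_def lastt_def mono_append)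
  finally show ?thesis .
qed

lemma CT_cons:
  "CT f x e (y # w) m = of_int (f y e) * dvl x (m * mono (y # w))
     + (\<Sum>s<Suc (length w). of_int (f (hdt x w s) (lastt y w s)) * dvl x (gen_el y * mono (take s w) * m * mono (drop s w)))"
proof -
  have "CT f x e (y # w) m = of_int (f (hdt x (y # w) 0) (lastt e (y # w) 0)) * dvl x (mono (take 0 (y # w)) * m * mono (drop 0 (y # w)))
     + (\<Sum>s<Suc (length w). of_int (f (hdt x (y # w) (Suc s)) (lastt e (y # w) (Suc s))) * dvl x (mono (take (Suc s) (y # w)) * m * mono (drop (Suc s) (y # w))))"
    unfolding CT_def by (simp only: length_Cons sum.lessThan_Suc_shift)
  also have "(\<Sum>s<Suc (length w). of_int (f (hdt x (y # w) (Suc s)) (lastt e (y # w) (Suc s))) * dvl x (mono (take (Suc s) (y # w)) * m * mono (drop (Suc s) (y # w))))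
     = (\<Sum>s<Suc (length w). of_int (f (hdt x w s) (lastt y w s)) * dvl x (gen_el y * mono (take s w) * m * mono (drop s w)))"
    by (rule sum.cong) (auto simp: hdt_def lastt_def mono_Cons nth_Cons' mult.assoc)
  finally show ?thesis by (simp add: hdt_def lastt_def)
qed

lemma CT_e_change:
  "CT f x e w m = CT f x x w m + (of_int (f (hdt x w 0) e) - of_int (f (hdt x w 0) x)) * dvl x (m * mono w)"
proof -
  have "CT f x e w m = of_int (f (hdt x w 0) e) * dvl x (m * mono w)
      + (\<Sum>s<length w. of_int (f (hdt x w (Suc s)) (lastt e w (Suc s))) * dvl x (mono (take (Suc s) w) * m * mono (drop (Suc s) w)))"
    unfolding CT_def by (simp only: sum.lessThan_Suc_shift) (simp add: lastt_def)
  moreover have "CT f x x w m = of_int (f (hdt x w 0) x) * dvl x (m * mono w)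
      + (\<Sum>s<length w. of_int (f (hdt x w (Suc s)) (lastt x w (Suc s))) * dvl x (mono (take (Suc s) w) * m * mono (drop (Suc s) w)))"
    unfolding CT_def by (simp only: sum.lessThan_Suc_shift) (simp add: lastt_def)
  moreover have "lastt e w (Suc s) = lastt x w (Suc s)" for s by (simp add: lastt_def)
  ultimately show ?thesis by (simp add: algebra_simps)
qed

lemma dvl_lv: "dvl lv z = gen_el lv * z" by (simp add: dvl_def)
lemma dvl_lV: "dvl lV z = - (z * gen_el lV)" by (simp add: dvl_def)
lemma dvl_other: "x \<noteq> lv \<Longrightarrow> x \<noteq> lV \<Longrightarrow> dvl x z = 0" by (simp add: dvl_def)

lemma CT_snoc_lv:
  "CT f lv e (w @ [y]) m = (CT f lv e w m - of_int (f lv (lastt e w (length w))) * (gen_el lv * (mono w * m))) * gen_el y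
      + of_int (f y (lastt e w (length w))) * (gen_el lv * (mono w * m * gen_el y))
      + of_int (f lv y) * (gen_el lv * (mono w * gen_el y * m))"
  by (simp add: CT_snoc CT_split_last[of f lv e w m] dvl_lv sum_distrib_right algebra_simps)

lemma CT_cons_lV:
  "CT f lV lV (y # w) m = of_int (f y lV) * (- (m * mono (y # w) * gen_el lV))
     + gen_el y * (CT f lV lV w m + (of_int (f (hdt lV w 0) y) - of_int (f (hdt lV w 0) lV)) * (- (m * mono w * gen_el lV)))"
proof -
  have "(\<Sum>s<Suc (length w). of_int (f (hdt lV w s) (lastt y w s)) * dvl lV (gen_el y * mono (take s w) * m * mono (drop s w)))
      = gen_el y * CT f lV y w m"
    by (simp add: CT_def dvl_lV sum_distrib_left algebra_simps of_int_left)
  then show ?thesis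
    by (simp add: CT_cons CT_e_change[of f lV y w m] dvl_lV)
qed

lemma CT_zero: "x \<noteq> lv \<Longrightarrow> x \<noteq> lV \<Longrightarrow> CT f x e w m = 0"
  by (simp add: CT_def dvl_other)




definition f1 :: "letter \<Rightarrow> letter \<Rightarrow> int" where
  "f1 h l = (if h = lv then 1 else 0) - (if l = lV then 1 else 0)"
definition fE :: "letter \<Rightarrow> letter \<Rightarrow> int" where
  "fE h l = (if h = lu \<or> h = lV then 1 else 0) - (if l = lv \<or> l = lU then 1 else 0)"
definition fU :: "letter \<Rightarrow> letter \<Rightarrow> int" where
  "fU h l = (if h = lu then 1 else 0) - (if l = lU then 1 else 0)"

lemma KY_minus1: "KY q (- y) m = - KY q y m"
  using KY_cs1[of q "-1" y m] by (simp add: cs_neg1)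

lemma KY_dvl_lv: "KY q (dvl lv (mono w)) z = Kw q (lv # w) z"
  by (simp add: dvl_lv mono_Cons[symmetric] KY_mono)
lemma KY_dvl_lV: "KY q (dvl lV (mono w)) z = - Kw q (w @ [lV]) z"
  by (simp add: dvl_lV mono_snoc[symmetric] KY_mono KY_minus1)
lemma KY_zero1[simp]: "KY q 0 z = 0" by (simp add: KY_def)

lemma Kw_lu_snoc: "Kw [lu] (r @ [y]) z = Kw [lu] r z * gen_el y + mono r * kl lu y z"
  by (simp add: Kw_single1 DerW_append)
lemma Kw_lu_cons: "Kw [q] (y # r) z = kl q y z * mono r + gen_el y * Kw [q] r z"
  by (simp add: Kw_single1 DerW_Cons)
lemma Kw_q_snoc: "Kw [q] (r @ [y]) z = Kw [q] r z * gen_el y + mono r * kl q y z"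
  by (simp add: Kw_single1 DerW_append)

lemma letter_split: "(\<And>a b. P (L a b)) \<Longrightarrow> P x" by (cases x) auto

lemma bA_lv:
  "- (gen_el lv * W * kl lu y z)
   - (- (of_int (f1 lv l) * (gen_el lv * (W * (z * gen_el lu)))) * gen_el y
      + of_int (f1 y l) * (gen_el lv * (W * (z * gen_el lu) * gen_el y))
      + of_int (f1 lv y) * (gen_el lv * (W * gen_el y * (z * gen_el lu))))
   - (- (of_int (fE lv l) * (gen_el lv * (W * (z * gen_el lu)))) * gen_el y
      + of_int (fE y l) * (gen_el lv * (W * (z * gen_el lu) * gen_el y))
      + of_int (fE lv y) * (gen_el lv * (W * gen_el y * (z * gen_el lu))))
   + (- (of_int (fE lv l) * (gen_el lv * (W * (gen_el lu * z)))) * gen_el y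
      + of_int (fE y l) * (gen_el lv * (W * (gen_el lu * z) * gen_el y))
      + of_int (fE lv y) * (gen_el lv * (W * gen_el y * (gen_el lu * z)))) = 0"
  apply (rule letter_split[of _ y]; rule letter_split[of _ l])
  apply (rename_tac a b c d; case_tac a; case_tac b; case_tac c; case_tac d)
  by (simp_all add: kl_def mono_def f1_def fE_def algebra_simps cs_neg1)

lemma HA_lv: "- Kw [lu] (lv # w) z - CT f1 lv lv w (z * gen_el lu) - CT fE lv lv w (z * gen_el lu) + CT fE lv lv w (gen_el lu * z) = 0"
proof (induction w arbitrary: z rule: rev_induct)
  case Nil
  show ?case
    by (simp add: CT_def Kw_def kl_def mono_def hdt_def lastt_def f1_def fE_def dvl_lv algebra_simps cs_neg1)
next
  case (snoc y w)
  let ?l = "lastt lv w (length w)" and ?W = "mono w"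
  have e: "Kw [lu] (lv # w @ [y]) z = Kw [lu] (lv # w) z * gen_el y + (gen_el lv * mono w) * kl lu y z"
    using Kw_lu_snoc[of "lv # w" y z] by (simp add: mono_Cons)
  have "- Kw [lu] (lv # w @ [y]) z - CT f1 lv lv (w @ [y]) (z * gen_el lu) - CT fE lv lv (w @ [y]) (z * gen_el lu) + CT fE lv lv (w @ [y]) (gen_el lu * z)
      = (- Kw [lu] (lv # w) z - CT f1 lv lv w (z * gen_el lu) - CT fE lv lv w (z * gen_el lu) + CT fE lv lv w (gen_el lu * z)) * gen_el y
      + (- (gen_el lv * ?W * kl lu y z)
   - (- (of_int (f1 lv ?l) * (gen_el lv * (?W * (z * gen_el lu)))) * gen_el y
      + of_int (f1 y ?l) * (gen_el lv * (?W * (z * gen_el lu) * gen_el y))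
      + of_int (f1 lv y) * (gen_el lv * (?W * gen_el y * (z * gen_el lu))))
   - (- (of_int (fE lv ?l) * (gen_el lv * (?W * (z * gen_el lu)))) * gen_el y
      + of_int (fE y ?l) * (gen_el lv * (?W * (z * gen_el lu) * gen_el y))
      + of_int (fE lv y) * (gen_el lv * (?W * gen_el y * (z * gen_el lu))))
   + (- (of_int (fE lv ?l) * (gen_el lv * (?W * (gen_el lu * z)))) * gen_el y
      + of_int (fE y ?l) * (gen_el lv * (?W * (gen_el lu * z) * gen_el y))
      + of_int (fE lv y) * (gen_el lv * (?W * gen_el y * (gen_el lu * z)))))"
    by (simp only: e CT_snoc_lv) (simp add: algebra_simps)
  also have "\<dots> = 0" using snoc.IH bA_lv by simp
  finally show ?case .
qed

lemma bA_lV: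
  "kl lu y z * (W * gen_el lV)
   - (of_int (f1 y lV) * (- ((z * gen_el lu) * (gen_el y * W) * gen_el lV))
      + gen_el y * ((of_int (f1 h y) - of_int (f1 h lV)) * (- ((z * gen_el lu) * W * gen_el lV))))
   - (of_int (fE y lV) * (- ((z * gen_el lu) * (gen_el y * W) * gen_el lV))
      + gen_el y * ((of_int (fE h y) - of_int (fE h lV)) * (- ((z * gen_el lu) * W * gen_el lV))))
   + (of_int (fE y lV) * (- ((gen_el lu * z) * (gen_el y * W) * gen_el lV))
      + gen_el y * ((of_int (fE h y) - of_int (fE h lV)) * (- ((gen_el lu * z) * W * gen_el lV)))) = 0"
  apply (rule letter_split[of _ y]; rule letter_split[of _ h])
  apply (rename_tac a b c d; case_tac a; case_tac b; case_tac c; case_tac d)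
  by (simp_all add: kl_def mono_def f1_def fE_def algebra_simps cs_neg1)

lemma HA_lV: "Kw [lu] (w @ [lV]) z - CT f1 lV lV w (z * gen_el lu) - CT fE lV lV w (z * gen_el lu) + CT fE lV lV w (gen_el lu * z) = 0"
proof (induction w arbitrary: z)
  case Nil
  show ?case
    by (simp add: CT_def Kw_def kl_def mono_def hdt_def lastt_def f1_def fE_def dvl_lV algebra_simps cs_neg1)
next
  case (Cons y w)
  let ?h = "hdt lV w 0" and ?W = "mono w"
  have e: "Kw [lu] ((y # w) @ [lV]) z = kl lu y z * (mono w * gen_el lV) + gen_el y * Kw [lu] (w @ [lV]) z"
    using Kw_lu_cons[of lu y "w @ [lV]" z] by (simp add: mono_snoc)
  have "Kw [lu] ((y # w) @ [lV]) z - CT f1 lV lV (y # w) (z * gen_el lu) - CT fE lV lV (y # w) (z * gen_el lu) + CT fE lV lV (y # w) (gen_el lu * z)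
      = gen_el y * (Kw [lu] (w @ [lV]) z - CT f1 lV lV w (z * gen_el lu) - CT fE lV lV w (z * gen_el lu) + CT fE lV lV w (gen_el lu * z))
      + (kl lu y z * (?W * gen_el lV)
   - (of_int (f1 y lV) * (- ((z * gen_el lu) * (gen_el y * ?W) * gen_el lV))
      + gen_el y * ((of_int (f1 ?h y) - of_int (f1 ?h lV)) * (- ((z * gen_el lu) * ?W * gen_el lV))))
   - (of_int (fE y lV) * (- ((z * gen_el lu) * (gen_el y * ?W) * gen_el lV))
      + gen_el y * ((of_int (fE ?h y) - of_int (fE ?h lV)) * (- ((z * gen_el lu) * ?W * gen_el lV))))
   + (of_int (fE y lV) * (- ((gen_el lu * z) * (gen_el y * ?W) * gen_el lV))
      + gen_el y * ((of_int (fE ?h y) - of_int (fE ?h lV)) * (- ((gen_el lu * z) * ?W * gen_el lV)))))"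
    by (simp only: e CT_cons_lV mono_Cons) (simp add: algebra_simps)
  also have "\<dots> = 0" using Cons.IH bA_lV by simp
  finally show ?case by simp
qed

lemma HA: "- KY [lu] (dvl x (mono w)) z - CT f1 x x w (z * gen_el lu) - CT fE x x w (z * gen_el lu) + CT fE x x w (gen_el lu * z) = 0"
proof -
  consider "x = lv" | "x = lV" | "x \<noteq> lv \<and> x \<noteq> lV" by blast
  then show ?thesis
  proof cases
    case 1 then show ?thesis using HA_lv by (simp add: KY_dvl_lv)
  next
    case 2 then show ?thesis using HA_lV by (simp add: KY_dvl_lV)
  next
    case 3 then show ?thesis by (simp add: dvl_other CT_zero)
  qed
qed

definition bsn :: "(letter \<Rightarrow> letter \<Rightarrow> int) \<Rightarrow> letter \<Rightarrow> letter \<Rightarrow> A \<Rightarrow> A \<Rightarrow> A" where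
  "bsn f l y W m = - (of_int (f lv l) * (gen_el lv * (W * m))) * gen_el y
      + of_int (f y l) * (gen_el lv * (W * m * gen_el y))
      + of_int (f lv y) * (gen_el lv * (W * gen_el y * m))"

definition bcn :: "(letter \<Rightarrow> letter \<Rightarrow> int) \<Rightarrow> letter \<Rightarrow> letter \<Rightarrow> A \<Rightarrow> A \<Rightarrow> A" where
  "bcn f h y W m = of_int (f y lV) * (- (m * (gen_el y * W) * gen_el lV))
      + gen_el y * ((of_int (f h y) - of_int (f h lV)) * (- (m * W * gen_el lV)))"

lemma bB_lv:
  "(gen_el lv * W * gen_el y * (gen_el lv * z) - gen_el lv * W * (gen_el lv * z) * gen_el y)
   - gen_el lv * W * kl lv y z
   + bsn fU l y W (z * gen_el lv) - bsn fE l y W (z * gen_el lv) + bsn fE l y W (gen_el lv * z) = 0"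
  unfolding bsn_def
  apply (rule letter_split[of _ y]; rule letter_split[of _ l])
  apply (rename_tac a b c d; case_tac a; case_tac b; case_tac c; case_tac d)
  by (simp_all add: kl_def mono_def fU_def fE_def algebra_simps cs_neg1)

lemma HB_lv: "gen_el lv * mono w * (gen_el lv * z) - (gen_el lv * z) * (gen_el lv * mono w) - Kw [lv] (lv # w) z
   + CT fU lv lv w (z * gen_el lv) - CT fE lv lv w (z * gen_el lv) + CT fE lv lv w (gen_el lv * z) = 0"
proof (induction w arbitrary: z rule: rev_induct)
  case Nil
  show ?case
    by (simp add: CT_def Kw_def kl_def mono_def hdt_def lastt_def fU_def fE_def dvl_lv algebra_simps cs_neg1)
next
  case (snoc y w)
  let ?l = "lastt lv w (length w)" and ?W = "mono w"
  have e: "Kw [lv] (lv # w @ [y]) z = Kw [lv] (lv # w) z * gen_el y + (gen_el lv * mono w) * kl lv y z"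
    using Kw_q_snoc[of lv "lv # w" y z] by (simp add: mono_Cons)
  have "gen_el lv * mono (w @ [y]) * (gen_el lv * z) - (gen_el lv * z) * (gen_el lv * mono (w @ [y])) - Kw [lv] (lv # w @ [y]) z
   + CT fU lv lv (w @ [y]) (z * gen_el lv) - CT fE lv lv (w @ [y]) (z * gen_el lv) + CT fE lv lv (w @ [y]) (gen_el lv * z)
      = (gen_el lv * mono w * (gen_el lv * z) - (gen_el lv * z) * (gen_el lv * mono w) - Kw [lv] (lv # w) z
   + CT fU lv lv w (z * gen_el lv) - CT fE lv lv w (z * gen_el lv) + CT fE lv lv w (gen_el lv * z)) * gen_el y
      + ((gen_el lv * ?W * gen_el y * (gen_el lv * z) - gen_el lv * ?W * (gen_el lv * z) * gen_el y)
   - gen_el lv * ?W * kl lv y z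
   + bsn fU ?l y ?W (z * gen_el lv) - bsn fE ?l y ?W (z * gen_el lv) + bsn fE ?l y ?W (gen_el lv * z))"
    by (simp only: e CT_snoc_lv mono_snoc bsn_def) (simp add: algebra_simps)
  also have "\<dots> = 0" using snoc.IH bB_lv by simp
  finally show ?case .
qed

lemma bB_lV:
  "(gen_el lv * z * (gen_el y * W * gen_el lV) - gen_el y * (gen_el lv * z * (W * gen_el lV)))
   + kl lv y z * (W * gen_el lV)
   + bcn fU h y W (z * gen_el lv) - bcn fE h y W (z * gen_el lv) + bcn fE h y W (gen_el lv * z) = 0"
  unfolding bcn_def
  apply (rule letter_split[of _ y]; rule letter_split[of _ h])
  apply (rename_tac a b c d; case_tac a; case_tac b; case_tac c; case_tac d)
  by (simp_all add: kl_def mono_def fU_def fE_def algebra_simps cs_neg1)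

lemma HB_lV: "- (mono w * gen_el lV) * (gen_el lv * z) + (gen_el lv * z) * (mono w * gen_el lV) + Kw [lv] (w @ [lV]) z
   + CT fU lV lV w (z * gen_el lv) - CT fE lV lV w (z * gen_el lv) + CT fE lV lV w (gen_el lv * z) = 0"
proof (induction w arbitrary: z)
  case Nil
  show ?case
    by (simp add: CT_def Kw_def kl_def mono_def hdt_def lastt_def fU_def fE_def dvl_lV algebra_simps cs_neg1)
next
  case (Cons y w)
  let ?h = "hdt lV w 0" and ?W = "mono w"
  have e: "Kw [lv] ((y # w) @ [lV]) z = kl lv y z * (mono w * gen_el lV) + gen_el y * Kw [lv] (w @ [lV]) z"
    using Kw_lu_cons[of lv y "w @ [lV]" z] by (simp add: mono_snoc)
  have "- (mono (y # w) * gen_el lV) * (gen_el lv * z) + (gen_el lv * z) * (mono (y # w) * gen_el lV) + Kw [lv] ((y # w) @ [lV]) z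
   + CT fU lV lV (y # w) (z * gen_el lv) - CT fE lV lV (y # w) (z * gen_el lv) + CT fE lV lV (y # w) (gen_el lv * z)
      = gen_el y * (- (mono w * gen_el lV) * (gen_el lv * z) + (gen_el lv * z) * (mono w * gen_el lV) + Kw [lv] (w @ [lV]) z
   + CT fU lV lV w (z * gen_el lv) - CT fE lV lV w (z * gen_el lv) + CT fE lV lV w (gen_el lv * z))
      + ((gen_el lv * z * (gen_el y * ?W * gen_el lV) - gen_el y * (gen_el lv * z * (?W * gen_el lV)))
   + kl lv y z * (?W * gen_el lV)
   + bcn fU ?h y ?W (z * gen_el lv) - bcn fE ?h y ?W (z * gen_el lv) + bcn fE ?h y ?W (gen_el lv * z))"
    by (simp only: e CT_cons_lV mono_Cons bcn_def) (simp add: algebra_simps)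
  also have "\<dots> = 0" using Cons.IH bB_lV by simp
  finally show ?case by simp
qed

lemma HB: "dvl x (mono w) * (gen_el lv * z) - (gen_el lv * z) * dvl x (mono w) - KY [lv] (dvl x (mono w)) z
   + CT fU x x w (z * gen_el lv) - CT fE x x w (z * gen_el lv) + CT fE x x w (gen_el lv * z) = 0"
proof -
  consider "x = lv" | "x = lV" | "x \<noteq> lv \<and> x \<noteq> lV" by blast
  then show ?thesis
  proof cases
    case 1 then show ?thesis using HB_lv[of w z] unfolding 1 by (simp only: KY_dvl_lv) (simp add: dvl_lv mult.assoc)
  next
    case 2 then show ?thesis using HB_lV[of w z] unfolding 2 by (simp only: KY_dvl_lV) (simp add: dvl_lV)
  next
    case 3 then show ?thesis by (simp add: dvl_other CT_zero)
  qed
qed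




definition E :: "letter list \<Rightarrow> A \<Rightarrow> A" where
  "E p m = CS (\<lambda>r. of_int (fE (hd r) (last r)) * dv r m) p"

lemma Gam_lu: "Gam p [lu] z = - KY [lu] (PhiV (mono p)) z - DvA (PhiV (mono p)) (z * gen_el lu)"
proof -
  have d0: "dv [lu] m = 0" for m by (simp add: dv_def dvl_def)
  have "DvA (gen_el lu * PhiV (mono p)) z = DvA (PhiV (mono p)) (z * gen_el lu)"
    using DvA_deriv[of "gen_el lu" "PhiV (mono p)" z] DvA_mono[of "[lu]"] by (simp add: d0)
  then show ?thesis
    by (simp add: Gam_def d0 brK_lu)
qed

lemma Gam_lv: "Gam p [lv] z = PhiV (mono p) * (gen_el lv * z) - (gen_el lv * z) * PhiV (mono p)
    - KY [lv] (PhiV (mono p)) z + DvA (PhiU (mono p)) (z * gen_el lv)"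
proof -
  let ?P = "mono p"
  have d0: "dv [lv] m = gen_el lv * m" for m by (simp add: dv_def dvl_def)
  have b: "brK ?P (gen_el lv * z) - gen_el lv * brK ?P z = - (gen_el lv * PhiU ?P) * z"
    by (simp add: brK_deriv brK_lv)
  have "DvA (- (gen_el lv * PhiU ?P)) z = - (gen_el lv * PhiU ?P * z) - DvA (PhiU ?P) (z * gen_el lv)"
  proof -
    have "DvA (- (gen_el lv * PhiU ?P)) z = - DvA (gen_el lv * PhiU ?P) z"
      using DvA_cs1[of "-1" "gen_el lv * PhiU ?P" z] by (simp add: cs_neg1)
    also have "DvA (gen_el lv * PhiU ?P) z = dv [lv] (PhiU ?P * z) + DvA (PhiU ?P) (z * gen_el lv)"
      using DvA_deriv[of "gen_el lv" "PhiU ?P" z] DvA_mono[of "[lv]"] by simp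
    finally show ?thesis by (simp add: d0 mult.assoc)
  qed
  moreover have "brK ?P (mono [lv]) = - (gen_el lv * PhiU ?P)" by (simp add: brK_lv)
  ultimately show ?thesis
    using b by (simp add: Gam_def d0 algebra_simps)
qed

lemma PhiV_CS: "PhiV (mono p) = CS (\<lambda>r. dvl (hd r) (mono (tl r))) p"
  unfolding PhiV_mono dv_def DerI_def CS_def
  by (intro sum.cong refl) (simp add: rotate_nth_cons mono_append)

lemma PhiU_CS: "PhiU (mono p) = CS (\<lambda>r. dul (hd r) (mono (tl r))) p"
  unfolding PhiU_mono du_def DerI_def CS_def
  by (intro sum.cong refl) (simp add: rotate_nth_cons mono_append)

lemma KY_sum: "KY q (sum f S) z = (\<Sum>x\<in>S. KY q (f x) z)"
  by (induction S rule: infinite_finite_induct) (auto simp: KY_add1)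
lemma DvA_sum: "DvA (sum f S) z = (\<Sum>x\<in>S. DvA (f x) z)"
  by (induction S rule: infinite_finite_induct) (auto simp: DvA_add1)

lemma KY_CS: "KY q (CS H p) z = CS (\<lambda>r. KY q (H r) z) p"
  by (simp add: CS_def KY_sum)
lemma DvA_CS: "DvA (CS H p) z = CS (\<lambda>r. DvA (H r) z) p"
  by (simp add: CS_def DvA_sum)
lemma CS_rmult: "CS H p * c = CS (\<lambda>r. H r * c) p"
  by (simp add: CS_def sum_distrib_right)
lemma CS_lmult: "c * CS H p = CS (\<lambda>r. c * H r) p"
  by (simp add: CS_def sum_distrib_left)

lemma DvA_minus1: "DvA (- y) m = - DvA y m"
  using DvA_cs1[of "-1" y m] by (simp add: cs_neg1)

definition ind :: "bool \<Rightarrow> int" where "ind b = (if b then 1 else 0)"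

lemma DvA_dvl: "r \<noteq> [] \<Longrightarrow> DvA (dvl (hd r) (mono (tl r))) m
   = of_int (ind (hd r = lv)) * dv r m - of_int (ind (hd r = lV)) * dv (rotate 1 r) m"
proof -
  assume "r \<noteq> []"
  then obtain x w where r: "r = x # w" by (cases r) auto
  show ?thesis
    unfolding r
    by (cases "x = lv"; cases "x = lV")
       (simp_all add: ind_def dvl_def mono_Cons[symmetric] mono_snoc[symmetric] DvA_mono DvA_minus1 rotate_Suc)
qed

lemma DvA_dul: "r \<noteq> [] \<Longrightarrow> DvA (dul (hd r) (mono (tl r))) m
   = of_int (ind (hd r = lu)) * dv r m - of_int (ind (hd r = lU)) * dv (rotate 1 r) m"
proof -
  assume "r \<noteq> []"
  then obtain x w where r: "r = x # w" by (cases r) auto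
  show ?thesis
    unfolding r
    by (cases "x = lu"; cases "x = lU")
       (simp_all add: ind_def dul_def mono_Cons[symmetric] mono_snoc[symmetric] DvA_mono DvA_minus1 rotate_Suc)
qed

lemma CS_dv_to_CT: "CS (\<lambda>r. of_int (f (hd r) (last r)) * dv r m) p = CS (\<lambda>r. CT f (hd r) (hd r) (tl r) m) p"
proof -
  have "CS (\<lambda>r. of_int (f (hd r) (last r)) * dv r m) p = CS (\<lambda>r. sws (\<lambda>r. of_int (f (hd r) (last r))) r m) p"
    by (rule CS_swap)
  also have "\<dots> = CS (\<lambda>r. CT f (hd r) (hd r) (tl r) m) p"
  proof (rule CS_cong)
    fix r :: "letter list" assume "r \<noteq> []"
    then obtain x w where r: "r = x # w" by (cases r) auto
    show "sws (\<lambda>r. of_int (f (hd r) (last r))) r m = CT f (hd r) (hd r) (tl r) m"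
      unfolding r by (simp add: sws_CT)
  qed
  finally show ?thesis .
qed

lemma DvA_PhiV: "DvA (PhiV (mono p)) m = CS (\<lambda>r. CT f1 (hd r) (hd r) (tl r) m) p"
proof -
  have "DvA (PhiV (mono p)) m = CS (\<lambda>r. of_int (ind (hd r = lv)) * dv r m - of_int (ind (hd r = lV)) * dv (rotate 1 r) m) p"
    unfolding PhiV_CS DvA_CS by (rule CS_cong) (rule DvA_dvl)
  also have "\<dots> = CS (\<lambda>r. of_int (ind (hd r = lv)) * dv r m) p - CS (\<lambda>r. of_int (ind (last r = lV)) * dv r m) p"
    using CS_shift_hd[of "\<lambda>a r. of_int (ind (a = lV)) * dv r m" p] by (simp add: CS_diff)
  also have "\<dots> = CS (\<lambda>r. of_int (f1 (hd r) (last r)) * dv r m) p"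
    by (simp add: CS_diff[symmetric] f1_def ind_def algebra_simps of_int_diff)
  also have "\<dots> = CS (\<lambda>r. CT f1 (hd r) (hd r) (tl r) m) p" by (rule CS_dv_to_CT)
  finally show ?thesis .
qed

lemma DvA_PhiU: "DvA (PhiU (mono p)) m = CS (\<lambda>r. CT fU (hd r) (hd r) (tl r) m) p"
proof -
  have "DvA (PhiU (mono p)) m = CS (\<lambda>r. of_int (ind (hd r = lu)) * dv r m - of_int (ind (hd r = lU)) * dv (rotate 1 r) m) p"
    unfolding PhiU_CS DvA_CS by (rule CS_cong) (rule DvA_dul)
  also have "\<dots> = CS (\<lambda>r. of_int (ind (hd r = lu)) * dv r m) p - CS (\<lambda>r. of_int (ind (last r = lU)) * dv r m) p"
    using CS_shift_hd[of "\<lambda>a r. of_int (ind (a = lU)) * dv r m" p] by (simp add: CS_diff)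
  also have "\<dots> = CS (\<lambda>r. of_int (fU (hd r) (last r)) * dv r m) p"
    by (simp add: CS_diff[symmetric] fU_def ind_def algebra_simps of_int_diff)
  also have "\<dots> = CS (\<lambda>r. CT fU (hd r) (hd r) (tl r) m) p" by (rule CS_dv_to_CT)
  finally show ?thesis .
qed

lemma E_CT: "E p m = CS (\<lambda>r. CT fE (hd r) (hd r) (tl r) m) p"
  unfolding E_def by (rule CS_dv_to_CT)

lemma Gam_lu_E: "Gam p [lu] z = E p (z * gen_el lu) - E p (gen_el lu * z)"
proof -
  have "Gam p [lu] z - (E p (z * gen_el lu) - E p (gen_el lu * z))
     = CS (\<lambda>r. - KY [lu] (dvl (hd r) (mono (tl r))) z - CT f1 (hd r) (hd r) (tl r) (z * gen_el lu)
          - CT fE (hd r) (hd r) (tl r) (z * gen_el lu) + CT fE (hd r) (hd r) (tl r) (gen_el lu * z)) p"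
    by (simp add: Gam_lu PhiV_CS[symmetric] KY_CS[symmetric] DvA_PhiV E_CT CS_add CS_diff CS_minus
         PhiV_CS[of p, symmetric])
  also have "\<dots> = 0"
    by (rule CS_zero) (rule HA)
  finally show ?thesis by simp
qed

lemma Gam_lv_E: "Gam p [lv] z = E p (z * gen_el lv) - E p (gen_el lv * z)"
proof -
  have "Gam p [lv] z - (E p (z * gen_el lv) - E p (gen_el lv * z))
     = CS (\<lambda>r. dvl (hd r) (mono (tl r)) * (gen_el lv * z) - (gen_el lv * z) * dvl (hd r) (mono (tl r))
          - KY [lv] (dvl (hd r) (mono (tl r))) z
          + CT fU (hd r) (hd r) (tl r) (z * gen_el lv)
          - CT fE (hd r) (hd r) (tl r) (z * gen_el lv) + CT fE (hd r) (hd r) (tl r) (gen_el lv * z)) p"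
    by (simp add: Gam_lv KY_CS[symmetric] DvA_PhiU E_CT CS_add CS_diff CS_minus CS_rmult[symmetric] CS_lmult[symmetric]
         PhiV_CS[of p, symmetric])
  also have "\<dots> = 0"
    by (rule CS_zero) (rule HB)
  finally show ?thesis by simp
qed

lemma GG_mono: "GG (mono p) (mono q) = 0"
  by (rule GG_zero_from[of p "E p"]) (simp_all add: Gam_lu_E Gam_lv_E)

lemma JJ_lu_mono: "JJ (mono p) (mono q) (gen_el lu) = 0"
  by (simp add: JJ_lu GG_mono)




section \<open>The swap symmetry u <-> v\<close>

fun sw :: "letter \<Rightarrow> letter" where "sw (L g e) = L (\<not> g) e"

lemma sw_sw[simp]: "sw (sw x) = x" by (cases x) auto
lemma sw_inv: "sw (inv_l x) = inv_l (sw x)" by (cases x) auto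
lemma sw_comp[simp]: "sw \<circ> sw = id" by (rule ext) simp
lemma map_sw_sw[simp]: "map sw (map sw w) = w" by (induction w) auto

lemma mono_map_sw_cr: "mono (map sw (cr x r)) = mono (map sw (x # r))"
proof (cases r)
  case (Cons y r')
  show ?thesis
  proof (cases "y = inv_l x")
    case True
    then show ?thesis using Cons by (simp add: mono_Cons sw_inv gen_inv_assoc)
  qed (use Cons in auto)
qed simp

lemma mono_map_sw_red: "mono (map sw (red w)) = mono (map sw w)"
  by (induction w) (simp_all add: red_Cons mono_map_sw_cr mono_Cons)

definition Sg :: "A \<Rightarrow> A" where "Sg y = linw (\<lambda>w. mono (map sw w)) y"

lemma Sg_mono: "Sg (mono w) = mono (map sw w)"
  by (simp add: Sg_def linw_mono mono_map_sw_red)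
lemma Sg_add: "Sg (a + b) = Sg a + Sg b" by (simp add: Sg_def linw_add)
lemma Sg_cs: "Sg (cs c a) = cs c (Sg a)" by (simp add: Sg_def linw_cs)
lemma Sg_zero[simp]: "Sg 0 = 0" by (simp add: Sg_def)
lemma Sg_minus: "Sg (- a) = - Sg a" using Sg_cs[of "-1" a] by (simp add: cs_neg1)
lemma Sg_diff: "Sg (a - b) = Sg a - Sg b" using Sg_add[of a "-b"] by (simp add: Sg_minus)
lemma Sg_sum: "Sg (sum f S) = (\<Sum>x\<in>S. Sg (f x))"
  by (induction S rule: infinite_finite_induct) (auto simp: Sg_add)
lemma Sg_gen: "Sg (gen_el x) = gen_el (sw x)"
  using Sg_mono[of "[x]"] by simp

lemma Sg_mult_mono: "Sg (mono w * b) = Sg (mono w) * Sg b"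
proof -
  have "(\<lambda>b. Sg (mono w * b)) b = (\<lambda>b. Sg (mono w) * Sg b) b"
    by (rule A_eq) (simp_all add: distrib_left Sg_add Sg_cs cs_mult_right mono_append[symmetric] Sg_mono)
  then show ?thesis by simp
qed

lemma Sg_mult: "Sg (a * b) = Sg a * Sg b"
proof -
  have "(\<lambda>a. Sg (a * b)) a = (\<lambda>a. Sg a * Sg b) a"
    by (rule A_eq) (simp_all add: distrib_right Sg_add Sg_cs cs_mult_left Sg_mult_mono)
  then show ?thesis by simp
qed

lemma Sg_Sg: "Sg (Sg a) = a"
proof -
  have "(\<lambda>a. Sg (Sg a)) a = (\<lambda>a. a) a"
    by (rule A_eq) (simp_all add: Sg_add Sg_cs Sg_mono)
  then show ?thesis by simp
qed

lemma kl_sw: "kl (sw x) (sw y) (Sg z) = - Sg (kl x y z)"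
  by (cases x; cases y; rename_tac a b c d; case_tac a; case_tac b; case_tac c; case_tac d)
     (simp_all add: kl_def mono_def Sg_mult Sg_gen Sg_cs Sg_minus cs_neg1)

lemma kl_sw': "kl (sw x) (sw y) (mono (map sw a) * mono (map sw b)) = - Sg (kl x y (mono a * mono b))"
  using kl_sw[of x y "mono a * mono b"] by (simp add: Sg_mult Sg_mono)

lemma Bw_sw: "Bw (map sw a) (map sw b) = - Sg (Bw a b)"
proof -
  have "Bw (map sw a) (map sw b) = (\<Sum>i<length a. \<Sum>j<length b.
      mono (map sw (take j b)) * kl (sw (a ! i)) (sw (b ! j)) (mono (map sw (drop (Suc i) a)) * mono (map sw (take i a))) * mono (map sw (drop (Suc j) b)))"
    unfolding Bw_def Kw_def by (simp add: take_map drop_map)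
  also have "\<dots> = (\<Sum>i<length a. \<Sum>j<length b.
      - (mono (map sw (take j b)) * Sg (kl (a ! i) (b ! j) (mono (drop (Suc i) a) * mono (take i a))) * mono (map sw (drop (Suc j) b))))"
    by (simp add: kl_sw')
  also have "\<dots> = - Sg (Bw a b)"
    unfolding Bw_def Kw_def by (simp add: Sg_sum Sg_mult Sg_mono sum_negf)
  finally show ?thesis .
qed

lemma brK_Sg: "brK (Sg a) (Sg b) = - Sg (brK a b)"
proof -
  have mm: "brK (Sg (mono w1)) (Sg (mono w2)) = - Sg (brK (mono w1) (mono w2))" for w1 w2
    by (simp add: Sg_mono brK_mono_eq Bw_sw)
  have m1: "brK (Sg (mono w1)) (Sg b) = - Sg (brK (mono w1) b)" for w1
  proof -
    have "(\<lambda>b. brK (Sg (mono w1)) (Sg b)) b = (\<lambda>b. - Sg (brK (mono w1) b)) b"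
      by (rule A_eq) (simp_all add: Sg_add Sg_cs brK_add2 brK_cs2 mm cs_minus)
    then show ?thesis by simp
  qed
  have "(\<lambda>a. brK (Sg a) (Sg b)) a = (\<lambda>a. - Sg (brK a b)) a"
    by (rule A_eq) (simp_all add: Sg_add Sg_cs brK_add1 brK_cs1 m1 cs_minus)
  then show ?thesis by simp
qed

lemma brK_minus1: "brK (- a) b = - brK a b" using brK_cs1[of "-1" a b] by (simp add: cs_neg1)
lemma brK_minus2: "brK a (- b) = - brK a b" using brK_cs2[of a "-1" b] by (simp add: cs_neg1)

lemma JJ_Sg: "JJ (Sg a) (Sg b) (Sg c) = Sg (JJ a b c)"
proof -
  have "brK (Sg a) (brK (Sg b) (Sg c)) = Sg (brK a (brK b c))"
    by (simp only: brK_Sg brK_minus2 minus_minus)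
  moreover have "brK (Sg b) (brK (Sg a) (Sg c)) = Sg (brK b (brK a c))"
    by (simp only: brK_Sg brK_minus2 minus_minus)
  moreover have "brK (brK (Sg a) (Sg b)) (Sg c) = Sg (brK (brK a b) c)"
    by (simp only: brK_Sg brK_minus1 minus_minus)
  ultimately show ?thesis by (simp add: JJ_def Sg_diff)
qed

lemma JJ_lv_mono: "JJ (mono p) (mono q) (gen_el lv) = 0"
proof -
  have "JJ (mono p) (mono q) (gen_el lv) = JJ (Sg (mono (map sw p))) (Sg (mono (map sw q))) (Sg (gen_el lu))"
    by (simp add: Sg_mono Sg_gen)
  also have "\<dots> = Sg (JJ (mono (map sw p)) (mono (map sw q)) (gen_el lu))" by (rule JJ_Sg)
  also have "\<dots> = 0" by (simp add: JJ_lu_mono)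
  finally show ?thesis .
qed

theorem jacobi: "brK H1 (brK H2 x) - brK H2 (brK H1 x) = brK (brK H1 H2) x"
  using JJ_from_gens[OF JJ_lu_mono JJ_lv_mono, of H1 H2 x] by (simp add: JJ_def)




section \<open>Skew-symmetry modulo commutators\<close>

interpretation cmod: module "cs :: complex \<Rightarrow> A \<Rightarrow> A"
  by unfold_locales (simp_all add: cs_add cs_add2 cs_cs)

lemma commA_alt: "commA = cmod.span {x * y - y * x | x y. True}"
  by (simp add: commA_def)

lemma comm_in: "x * y - y * x \<in> commA"
  unfolding commA_alt by (rule cmod.span_base) blast

definition rl :: "letter \<Rightarrow> letter \<Rightarrow> A \<Rightarrow> A" where
  "rl x y z = (case lbr x y of None \<Rightarrow> 0 | Some (c, X, Y) \<Rightarrow> cs c (mono Y * z * mono X))"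

definition Rw :: "letter list \<Rightarrow> letter list \<Rightarrow> A" where
  "Rw b a = (\<Sum>i<length b. \<Sum>j<length a.
      mono (take i b) * rl (b ! i) (a ! j) (mono (drop (Suc j) a) * mono (take j a)) * mono (drop (Suc i) b))"

lemma Bw_Rw_comm: "Bw b a - Rw b a \<in> commA"
proof -
  have "Bw b a - Rw b a = (\<Sum>i<length b. \<Sum>j<length a.
     (case lbr (b ! i) (a ! j) of None \<Rightarrow> 0 | Some (c, X, Y) \<Rightarrow>
        cs c ((mono (take j a) * mono X * mono (drop (Suc i) b)) * (mono (take i b) * mono Y * mono (drop (Suc j) a))
            - (mono (take i b) * mono Y * mono (drop (Suc j) a)) * (mono (take j a) * mono X * mono (drop (Suc i) b)))))"
    unfolding Bw_def Kw_def Rw_def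
    unfolding sum_subtractf[symmetric]
    by (intro sum.cong refl) (auto simp: kl_def rl_def cs_mult_left cs_mult_right cs_diff mult.assoc split: option.split)
  also have "\<dots> \<in> commA"
    unfolding commA_alt
    apply (intro cmod.span_sum)
    apply (auto split: option.split simp: cmod.span_zero)
    apply (rule cmod.span_scale, rule cmod.span_base, blast)
    done
  finally show ?thesis .
qed

lemma Rw_outer: "Rw b a = DerW (\<lambda>y. Rw [y] a) b"
  unfolding Rw_def DerW_def by (simp add: sum_distrib_left sum_distrib_right)

lemma Bw_outer: "Bw a b = DerW (\<lambda>y. Bw a [y]) b"
  unfolding Bw_def by (rule Kw_outer)

lemma rl_cancel2: "rl y x z * gen_el (inv_l y) + gen_el y * rl (inv_l y) x z = 0"
  by (cases x; cases y; rename_tac a b c d; case_tac a; case_tac b; case_tac c; case_tac d)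
     (simp_all add: rl_def mono_def mult.assoc cs_neg1)

lemma Rw_cancel: "Rw [y] a * gen_el (inv_l y) + gen_el y * Rw [inv_l y] a = 0"
proof -
  have "Rw [y] a * gen_el (inv_l y) + gen_el y * Rw [inv_l y] a
     = (\<Sum>j<length a. rl y (a ! j) (mono (drop (Suc j) a) * mono (take j a)) * gen_el (inv_l y)
          + gen_el y * rl (inv_l y) (a ! j) (mono (drop (Suc j) a) * mono (take j a)))"
    by (simp add: Rw_def sum_distrib_left sum_distrib_right sum.distrib)
  also have "\<dots> = 0" by (simp add: rl_cancel2)
  finally show ?thesis .
qed

lemma Bw_cancel: "Bw a [y] * gen_el (inv_l y) + gen_el y * Bw a [inv_l y] = 0"
proof -
  have "Bw a [y] * gen_el (inv_l y) + gen_el y * Bw a [inv_l y]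
        = DerI (\<lambda>x z. kl x y z * gen_el (inv_l y) + gen_el y * kl x (inv_l y) z) a 1"
    by (simp add: Bw_def Kw_single2 DerI_add DerI_lmult DerI_rmult)
  also have "\<dots> = 0" by (simp add: kl_cancel2 DerI_zero)
  finally show ?thesis .
qed

lemma DerW_eq_gens:
  assumes c1: "\<And>x. d1 x * gen_el (inv_l x) + gen_el x * d1 (inv_l x) = 0"
      and c2: "\<And>x. d2 x * gen_el (inv_l x) + gen_el x * d2 (inv_l x) = 0"
      and u: "d1 lu = d2 lu" and v: "d1 lv = d2 lv"
  shows "DerW d1 w = DerW d2 w"
proof (rule DerW_cong)
  fix y
  have pos: "d1 (L g False) = d2 (L g False)" for g using u v by (cases g) auto
  have inv: "d (L g True) = - (gen_el (L g True) * d (L g False) * gen_el (L g True))"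
    if "\<And>x. d x * gen_el (inv_l x) + gen_el x * d (inv_l x) = 0" for d g
  proof -
    have "d (L g False) * gen_el (L g True) + gen_el (L g False) * d (L g True) = 0"
      using that[of "L g False"] by simp
    then have "gen_el (L g True) * (d (L g False) * gen_el (L g True) + gen_el (L g False) * d (L g True)) = 0" by simp
    then show ?thesis by (simp add: distrib_left mult.assoc eq_neg_iff_add_eq_0 add.commute)
  qed
  show "d1 y = d2 y"
  proof (cases y)
    case (L g e)
    then show ?thesis using pos inv[OF c1] inv[OF c2] by (cases e) auto
  qed
qed

lemma DerW_comm: "DerW (\<lambda>y. gen_el y * c - c * gen_el y) b = mono b * c - c * mono b"
proof (induction b)
  case (Cons x b)
  show ?case by (simp only: DerW_Cons Cons.IH mono_Cons) (simp add: algebra_simps)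
qed simp




definition phA :: "bool \<Rightarrow> letter list \<Rightarrow> A" where
  "phA g r = (if hd r = L g False then mono r else 0) - (if hd r = L g True then mono (rotate 1 r) else 0)"
definition phB :: "bool \<Rightarrow> letter list \<Rightarrow> A" where
  "phB g r = (if hd r = L g False then mono (rotate 1 r) else 0) - (if hd r = L g True then mono r else 0)"

definition wa :: "letter list \<Rightarrow> A" where
  "wa a = CS (phB True) a - CS (phA False) a"

lemma Bw_single_CS: "Bw a [y] = CS (\<lambda>r. kl (hd r) y (mono (tl r))) a"
  unfolding Bw_def Kw_single2 DerI_def CS_def
  by (intro sum.cong refl) (simp add: rotate_nth_cons mono_append)

lemma Rw_single_CS: "Rw [y] a = CS (\<lambda>r. rl y (hd r) (mono (tl r))) a"
proof -
  have "Rw [y] a = (\<Sum>j<length a. rl y (a ! j) (mono (drop (Suc j) a) * mono (take j a)))"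
    by (simp add: Rw_def)
  also have "\<dots> = CS (\<lambda>r. rl y (hd r) (mono (tl r))) a"
    unfolding CS_def by (intro sum.cong refl) (simp add: rotate_nth_cons mono_append)
  finally show ?thesis .
qed

lemma ph_u: "r \<noteq> [] \<Longrightarrow> kl (hd r) lu (mono (tl r)) + rl lu (hd r) (mono (tl r)) = gen_el lu * phA True r - phB True r * gen_el lu"
proof -
  assume "r \<noteq> []"
  then obtain x w where r: "r = x # w" by (cases r) auto
  show ?thesis unfolding r
    by (cases x; rename_tac a b; case_tac a; case_tac b)
       (simp_all add: kl_def rl_def phA_def phB_def mono_def rotate_Suc mult.assoc cs_neg1)
qed

lemma ph_v: "r \<noteq> [] \<Longrightarrow> kl (hd r) lv (mono (tl r)) + rl lv (hd r) (mono (tl r)) = - (gen_el lv * phA False r) + phB False r * gen_el lv"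
proof -
  assume "r \<noteq> []"
  then obtain x w where r: "r = x # w" by (cases r) auto
  show ?thesis unfolding r
    by (cases x; rename_tac a b; case_tac a; case_tac b)
       (simp_all add: kl_def rl_def phA_def phB_def mono_def rotate_Suc mult.assoc cs_neg1)
qed

lemma pt_u: "r \<noteq> [] \<Longrightarrow> gen_el lu * phB False r = phA False r * gen_el lu"
proof -
  assume "r \<noteq> []"
  then obtain x w where r: "r = x # w" by (cases r) auto
  show ?thesis unfolding r
    by (cases x; rename_tac a b; case_tac a; case_tac b)
       (simp_all add: phA_def phB_def mono_def rotate_Suc mult.assoc)
qed

lemma pt_v: "r \<noteq> [] \<Longrightarrow> phA True r * gen_el lv = gen_el lv * phB True r"
proof -
  assume "r \<noteq> []"
  then obtain x w where r: "r = x # w" by (cases r) auto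
  show ?thesis unfolding r
    by (cases x; rename_tac a b; case_tac a; case_tac b)
       (simp_all add: phA_def phB_def mono_def rotate_Suc mult.assoc)
qed

lemma fund: "CS (phA True) a + CS (phA False) a - CS (phB True) a - CS (phB False) a = 0"
proof -
  have "CS (phA True) a + CS (phA False) a - CS (phB True) a - CS (phB False) a
      = CS (\<lambda>r. mono r) a - CS (\<lambda>r. mono (rotate 1 r)) a"
    unfolding CS_add[symmetric] CS_diff[symmetric]
  proof (rule CS_cong)
    fix r :: "letter list" assume "r \<noteq> []"
    then obtain x w where r: "r = x # w" by (cases r) auto
    show "phA True r + phA False r - phB True r - phB False r = mono r - mono (rotate 1 r)"
      unfolding r by (cases x; rename_tac a b; case_tac a; case_tac b) (simp_all add: phA_def phB_def)
  qed
  also have "CS (\<lambda>r. mono (rotate 1 r)) a = CS (\<lambda>r. mono r) a"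
    using CS_shift_hd[of "\<lambda>x r. mono r" a] by simp
  finally show ?thesis by simp
qed

lemma Q_u: "Bw a [lu] + Rw [lu] a = gen_el lu * wa a - wa a * gen_el lu"
proof -
  have q: "Bw a [lu] + Rw [lu] a = gen_el lu * CS (phA True) a - CS (phB True) a * gen_el lu"
    unfolding Bw_single_CS Rw_single_CS CS_add[symmetric] CS_lmult CS_rmult CS_diff[symmetric]
    by (rule CS_cong) (rule ph_u)
  have p: "gen_el lu * CS (phB False) a = CS (phA False) a * gen_el lu"
    unfolding CS_lmult CS_rmult by (rule CS_cong) (rule pt_u)
  have f: "CS (phB False) a = CS (phA True) a + CS (phA False) a - CS (phB True) a"
    using fund[of a] by (simp add: algebra_simps)
  show ?thesis using p unfolding q wa_def f by (simp add: algebra_simps)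
qed

lemma Q_v: "Bw a [lv] + Rw [lv] a = gen_el lv * wa a - wa a * gen_el lv"
proof -
  have q: "Bw a [lv] + Rw [lv] a = - (gen_el lv * CS (phA False) a) + CS (phB False) a * gen_el lv"
    unfolding Bw_single_CS Rw_single_CS CS_add[symmetric] CS_lmult CS_rmult CS_minus[symmetric]
    by (rule CS_cong) (rule ph_v)
  have p: "CS (phA True) a * gen_el lv = gen_el lv * CS (phB True) a"
    unfolding CS_lmult CS_rmult by (rule CS_cong) (rule pt_v)
  have f: "CS (phB False) a = CS (phA True) a + CS (phA False) a - CS (phB True) a"
    using fund[of a] by (simp add: algebra_simps)
  show ?thesis using p unfolding q wa_def f by (simp add: algebra_simps)
qed

lemma Q_all: "Bw a b + Rw b a = mono b * wa a - wa a * mono b"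
proof -
  have "Bw a b + Rw b a = DerW (\<lambda>y. Bw a [y] + Rw [y] a) b"
    by (simp add: Bw_outer[of a b] Rw_outer[of b a] DerW_add)
  also have "\<dots> = DerW (\<lambda>y. gen_el y * wa a - wa a * gen_el y) b"
  proof (rule DerW_eq_gens)
    fix x
    show "(Bw a [x] + Rw [x] a) * gen_el (inv_l x) + gen_el x * (Bw a [inv_l x] + Rw [inv_l x] a) = 0"
      using Bw_cancel[of a x] Rw_cancel[of x a] by (simp add: algebra_simps)
    show "(gen_el x * wa a - wa a * gen_el x) * gen_el (inv_l x) + gen_el x * (gen_el (inv_l x) * wa a - wa a * gen_el (inv_l x)) = 0"
      by (simp add: algebra_simps gen_inv_assoc gen_inv)
  qed (simp_all add: Q_u Q_v)
  also have "\<dots> = mono b * wa a - wa a * mono b" by (rule DerW_comm)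
  finally show ?thesis .
qed

lemma Bw_skew: "Bw a b + Bw b a \<in> commA"
proof -
  have "Bw a b + Bw b a = (mono b * wa a - wa a * mono b) + (Bw b a - Rw b a)"
    using Q_all[of a b] by (simp add: algebra_simps)
  also have "\<dots> \<in> commA"
    unfolding commA_alt
    using Bw_Rw_comm[of b a] comm_in[of "mono b" "wa a"] unfolding commA_alt
    by (intro cmod.span_add)
  finally show ?thesis .
qed

lemma commA_add: "x \<in> commA \<Longrightarrow> y \<in> commA \<Longrightarrow> x + y \<in> commA"
  unfolding commA_alt by (rule cmod.span_add)
lemma commA_cs: "x \<in> commA \<Longrightarrow> cs c x \<in> commA"
  unfolding commA_alt by (rule cmod.span_scale)
lemma commA_zero: "0 \<in> commA"
  unfolding commA_alt by (rule cmod.span_zero)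

lemma brK_skew: "brK a b + brK b a \<in> commA"
proof (induction a arbitrary: b rule: A_induct)
  case zero then show ?case by (simp add: commA_zero)
next
  case (add f c w)
  have m: "brK (mono w) b + brK b (mono w) \<in> commA" for b
  proof (induction b rule: A_induct)
    case zero then show ?case by (simp add: commA_zero)
  next
    case (add g d w2)
    have "brK (mono w) (g + cs d (mono w2)) + brK (g + cs d (mono w2)) (mono w)
        = (brK (mono w) g + brK g (mono w)) + cs d (brK (mono w) (mono w2) + brK (mono w2) (mono w))"
      by (simp add: brK_add1 brK_add2 brK_cs1 brK_cs2 cs_add algebra_simps)
    also have "\<dots> \<in> commA"
    proof -
      have "brK (mono w) (mono w2) + brK (mono w2) (mono w) \<in> commA"
        using Bw_skew by (simp add: brK_mono_eq)
      then show ?thesis using add by (auto intro!: commA_add commA_cs)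
    qed
    finally show ?case .
  qed
  have "brK (f + cs c (mono w)) b + brK b (f + cs c (mono w)) = (brK f b + brK b f) + cs c (brK (mono w) b + brK b (mono w))"
    by (simp add: brK_add1 brK_add2 brK_cs1 brK_cs2 cs_add algebra_simps)
  also have "\<dots> \<in> commA" by (rule commA_add[OF add.IH commA_cs[OF m]])
  finally show ?case .
qed


theorem mainTheorem1:
  shows
    "(\<forall>a a' b :: A. brK (a + a') b = brK a b + brK a' b)
   \<and> (\<forall>a b b' :: A. brK a (b + b') = brK a b + brK a b')
   \<and> (\<forall>(c::complex) (a::A) b. brK (cs c a) b = cs c (brK a b))
   \<and> (\<forall>(c::complex) (a::A) b. brK a (cs c b) = cs c (brK a b))
   \<and> (\<forall>a b c :: A. brK a (b * c) = brK a b * c + b * brK a c)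
   \<and> (\<forall>a b c :: A. brK (a * b) c = brK (b * a) c)
   \<and> (\<forall>a b :: A. brK a b + brK b a \<in> commA)
   \<and> (\<forall>H1 H2 x :: A. brK H1 (brK H2 x) - brK H2 (brK H1 x) = brK (brK H1 H2) x)"
  using brK_add1 brK_add2 brK_cs1 brK_cs2 brK_deriv brK_cyc brK_skew jacobi by blast

end
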